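(* Let $G$ be a finite primitive permutation group of O'Nan–Scott type $\mathrm{HA}$, $\mathrm{HS}$, $\mathrm{HC}$, $\mathrm{TW}$, $\mathrm{SD}$ or $\mathrm{CD}$, and let $M$ be a point stabilizer of $G$. Then $M$ is a perfect code of $G$.
   Context: All groups are finite. For a group $G$ with identity $e$ and an inverse-closed subset $S\subseteq G\setminus\{e\}$, the Cayley graph $\mathrm{Cay}(G,S)$ has vertex set $G$ and edges $\{g,sg\}$ for $s\in S$, $g\in G$. A perfect code in a graph is a set $C$ of vertices that is independent and such that every vertex outside $C$ is adjacent to exactly one vertex of $C$. A subset (in particular a subgroup) $C$ of a group $G$ is called a perfect code of $G$ if there is a Cayley graph $\mathrm{Cay}(G,S)$ of $G$ in which $C$ is a perfect code. The types $\mathrm{HA},\mathrm{HS},\mathrm{HC},\mathrm{TW},\mathrm{SD},\mathrm{CD},\mathrm{AS},\mathrm{PA}$ of primitive groups are those of the O'Nan–Scott classification (e.g. as in Praeger, 1997). *)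

theory Defs
  imports "HOL-Algebra.Algebra"
begin

definition primitive_action :: "('a, 'c) monoid_scheme \<Rightarrow> 'b set \<Rightarrow> ('a \<Rightarrow> 'b \<Rightarrow> 'b) \<Rightarrow> bool" where
  "primitive_action G \<Omega> \<phi> \<longleftrightarrow>
     group_action G \<Omega> \<phi> \<and> inj_on \<phi> (carrier G) \<and> \<Omega> \<noteq> {} \<and>
     (\<forall>x\<in>\<Omega>. \<forall>y\<in>\<Omega>. \<exists>g\<in>carrier G. \<phi> g x = y) \<and>
     (\<forall>B. B \<subseteq> \<Omega> \<and> B \<noteq> {} \<and>
          (\<forall>g\<in>carrier G. \<phi> g ` B = B \<or> \<phi> g ` B \<inter> B = {})
          \<longrightarrow> (\<exists>x. B = {x}) \<or> B = \<Omega>)"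

definition minimal_normal :: "('a, 'c) monoid_scheme \<Rightarrow> 'a set \<Rightarrow> bool" where
  "minimal_normal G N \<longleftrightarrow> N \<lhd> G \<and> N \<noteq> {\<one>\<^bsub>G\<^esub>} \<and>
     (\<forall>K. K \<lhd> G \<and> K \<subseteq> N \<longrightarrow> K = {\<one>\<^bsub>G\<^esub>} \<or> K = N)"

definition abelian_set :: "('a, 'c) monoid_scheme \<Rightarrow> 'a set \<Rightarrow> bool" where
  "abelian_set G N \<longleftrightarrow> (\<forall>x\<in>N. \<forall>y\<in>N. x \<otimes>\<^bsub>G\<^esub> y = y \<otimes>\<^bsub>G\<^esub> x)"

definition regular_on :: "('a, 'c) monoid_scheme \<Rightarrow> 'b set \<Rightarrow> ('a \<Rightarrow> 'b \<Rightarrow> 'b) \<Rightarrow> 'a set \<Rightarrow> bool" where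
  "regular_on G \<Omega> \<phi> N \<longleftrightarrow> (\<forall>x\<in>\<Omega>. \<forall>y\<in>\<Omega>. \<exists>!g. g \<in> N \<and> \<phi> g x = y)"

definition centralizer_in :: "('a, 'c) monoid_scheme \<Rightarrow> 'a set \<Rightarrow> 'a set \<Rightarrow> 'a set" where
  "centralizer_in G N T = {x\<in>N. \<forall>t\<in>T. x \<otimes>\<^bsub>G\<^esub> t = t \<otimes>\<^bsub>G\<^esub> x}"

(* the simple direct factors of N = T^k (N nonabelian characteristically simple):
   the minimal normal subgroups of N *)
definition simple_factors :: "('a, 'c) monoid_scheme \<Rightarrow> 'a set \<Rightarrow> 'a set set" where
  "simple_factors G N = {T. minimal_normal (G\<lparr>carrier := N\<rparr>) T}"

(* D is a full diagonal subgroup of N = T_1 x ... x T_k: D \<le> N and the projection of D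
   onto each factor T_i (whose kernel on N is the centralizer of T_i in N) is an isomorphism *)
definition full_diagonal :: "('a, 'c) monoid_scheme \<Rightarrow> 'a set \<Rightarrow> 'a set \<Rightarrow> bool" where
  "full_diagonal G N D \<longleftrightarrow> subgroup D G \<and> D \<subseteq> N \<and>
     (\<forall>T\<in>simple_factors G N.
        D \<inter> centralizer_in G N T = {\<one>\<^bsub>G\<^esub>} \<and> D <#>\<^bsub>G\<^esub> centralizer_in G N T = N)"

definition unique_minimal_normal :: "('a, 'c) monoid_scheme \<Rightarrow> 'a set \<Rightarrow> bool" where
  "unique_minimal_normal G N \<longleftrightarrow> minimal_normal G N \<and> (\<forall>K. minimal_normal G K \<longrightarrow> K = N)"

definition two_minimal_normal :: "('a, 'c) monoid_scheme \<Rightarrow> 'a set \<Rightarrow> 'a set \<Rightarrow> bool" where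
  "two_minimal_normal G N1 N2 \<longleftrightarrow> N1 \<noteq> N2 \<and> minimal_normal G N1 \<and> minimal_normal G N2 \<and>
     (\<forall>K. minimal_normal G K \<longrightarrow> K = N1 \<or> K = N2)"

definition type_HA :: "('a, 'c) monoid_scheme \<Rightarrow> 'b set \<Rightarrow> ('a \<Rightarrow> 'b \<Rightarrow> 'b) \<Rightarrow> bool" where
  "type_HA G \<Omega> \<phi> \<longleftrightarrow> (\<exists>N. unique_minimal_normal G N \<and> abelian_set G N \<and> regular_on G \<Omega> \<phi> N)"

definition type_HS :: "('a, 'c) monoid_scheme \<Rightarrow> 'b set \<Rightarrow> ('a \<Rightarrow> 'b \<Rightarrow> 'b) \<Rightarrow> bool" where
  "type_HS G \<Omega> \<phi> \<longleftrightarrow> (\<exists>N1 N2. two_minimal_normal G N1 N2 \<and>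
     \<not> abelian_set G N1 \<and> \<not> abelian_set G N2 \<and>
     simple_group (G\<lparr>carrier := N1\<rparr>) \<and> simple_group (G\<lparr>carrier := N2\<rparr>) \<and>
     regular_on G \<Omega> \<phi> N1 \<and> regular_on G \<Omega> \<phi> N2)"

definition type_HC :: "('a, 'c) monoid_scheme \<Rightarrow> 'b set \<Rightarrow> ('a \<Rightarrow> 'b \<Rightarrow> 'b) \<Rightarrow> bool" where
  "type_HC G \<Omega> \<phi> \<longleftrightarrow> (\<exists>N1 N2. two_minimal_normal G N1 N2 \<and>
     \<not> abelian_set G N1 \<and> \<not> abelian_set G N2 \<and>
     \<not> simple_group (G\<lparr>carrier := N1\<rparr>) \<and> \<not> simple_group (G\<lparr>carrier := N2\<rparr>) \<and>
     regular_on G \<Omega> \<phi> N1 \<and> regular_on G \<Omega> \<phi> N2)"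

definition type_TW :: "('a, 'c) monoid_scheme \<Rightarrow> 'b set \<Rightarrow> ('a \<Rightarrow> 'b \<Rightarrow> 'b) \<Rightarrow> bool" where
  "type_TW G \<Omega> \<phi> \<longleftrightarrow> (\<exists>N. unique_minimal_normal G N \<and> \<not> abelian_set G N \<and>
     \<not> simple_group (G\<lparr>carrier := N\<rparr>) \<and> regular_on G \<Omega> \<phi> N)"

definition type_SD :: "('a, 'c) monoid_scheme \<Rightarrow> 'b set \<Rightarrow> ('a \<Rightarrow> 'b \<Rightarrow> 'b) \<Rightarrow> bool" where
  "type_SD G \<Omega> \<phi> \<longleftrightarrow> (\<exists>N. unique_minimal_normal G N \<and> \<not> abelian_set G N \<and>
     \<not> simple_group (G\<lparr>carrier := N\<rparr>) \<and>
     (\<exists>\<alpha>\<in>\<Omega>. full_diagonal G N (N \<inter> stabilizer G \<phi> \<alpha>)))"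

(* CD: N = T^k = (T^m)^l with l \<ge> 2, m \<ge> 2, and N_alpha = D_1 x ... x D_l where D_j is a full
   diagonal subgroup of the j-th T^m; the l copies of T^m are given by a partition P of the
   simple factors of N into l blocks of size m. *)
definition type_CD :: "('a, 'c) monoid_scheme \<Rightarrow> 'b set \<Rightarrow> ('a \<Rightarrow> 'b \<Rightarrow> 'b) \<Rightarrow> bool" where
  "type_CD G \<Omega> \<phi> \<longleftrightarrow> (\<exists>N. unique_minimal_normal G N \<and> \<not> abelian_set G N \<and>
     (\<exists>\<alpha>\<in>\<Omega>. \<exists>P D m.
        disjoint P \<and> \<Union>P = simple_factors G N \<and> card P \<ge> 2 \<and> m \<ge> 2 \<and>
        (\<forall>B\<in>P. card B = m \<and> full_diagonal G (generate G (\<Union>B)) (D B)) \<and>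
        N \<inter> stabilizer G \<phi> \<alpha> = generate G (\<Union>B\<in>P. D B)))"

definition cayley_adj :: "('a, 'c) monoid_scheme \<Rightarrow> 'a set \<Rightarrow> 'a \<Rightarrow> 'a \<Rightarrow> bool" where
  "cayley_adj G S g h \<longleftrightarrow> (\<exists>s\<in>S. h = s \<otimes>\<^bsub>G\<^esub> g)"

definition perfect_code_cayley :: "('a, 'c) monoid_scheme \<Rightarrow> 'a set \<Rightarrow> 'a set \<Rightarrow> bool" where
  "perfect_code_cayley G S C \<longleftrightarrow> C \<subseteq> carrier G \<and>
     (\<forall>c\<in>C. \<forall>c'\<in>C. c \<noteq> c' \<longrightarrow> \<not> cayley_adj G S c c') \<and>
     (\<forall>g\<in>carrier G - C. \<exists>!c. c \<in> C \<and> cayley_adj G S g c)"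

definition perfect_code_of_group :: "('a, 'c) monoid_scheme \<Rightarrow> 'a set \<Rightarrow> bool" where
  "perfect_code_of_group G C \<longleftrightarrow>
     (\<exists>S. S \<subseteq> carrier G - {\<one>\<^bsub>G\<^esub>} \<and> (\<forall>s\<in>S. inv\<^bsub>G\<^esub> s \<in> S) \<and> perfect_code_cayley G S C)"

end

theory Submission
  imports Defs
begin

context group begin

lemma normal_sub_iff:
  assumes "subgroup N G"
  shows "(K \<lhd> G\<lparr>carrier := N\<rparr>) = (subgroup K G \<and> K \<subseteq> N \<and> (\<forall>n\<in>N. \<forall>k\<in>K. n \<otimes> k \<otimes> inv n \<in> K))"
proof -
  interpret H: group "G\<lparr>carrier := N\<rparr>" using subgroup_imp_group[OF assms] .
  have e: "(K \<lhd> G\<lparr>carrier := N\<rparr>) = (subgroup K (G\<lparr>carrier := N\<rparr>) \<and> (\<forall>x\<in>N. \<forall>h\<in>K. x \<otimes> h \<otimes> inv\<^bsub>G\<lparr>carrier := N\<rparr>\<^esub> x \<in> K))"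
    using H.normal_inv_iff by simp
  show ?thesis
  proof
    assume a: "K \<lhd> G\<lparr>carrier := N\<rparr>"
    then have s: "subgroup K (G\<lparr>carrier := N\<rparr>)" using e by blast
    have sub: "K \<subseteq> N" using subgroup.subset[OF s] by simp
    show "subgroup K G \<and> K \<subseteq> N \<and> (\<forall>n\<in>N. \<forall>k\<in>K. n \<otimes> k \<otimes> inv n \<in> K)"
      using incl_subgroup[OF assms s] sub a e m_inv_consistent[OF assms] by auto
  next
    assume a: "subgroup K G \<and> K \<subseteq> N \<and> (\<forall>n\<in>N. \<forall>k\<in>K. n \<otimes> k \<otimes> inv n \<in> K)"
    then show "K \<lhd> G\<lparr>carrier := N\<rparr>"
      using e subgroup_incl[OF _ assms] m_inv_consistent[OF assms] by auto
  qed
qed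

lemma normal_iff_G: "(K \<lhd> G) = (subgroup K G \<and> K \<subseteq> carrier G \<and> (\<forall>n\<in>carrier G. \<forall>k\<in>K. n \<otimes> k \<otimes> inv n \<in> K))"
  using normal_inv_iff subgroup.subset by blast

lemma generate_subgroup_eq: "subgroup E G \<Longrightarrow> generate G E = E"
  using generateI[of E E] by auto

lemma exists_min_normal:
  assumes "subgroup N G" "finite N" "L \<lhd> G\<lparr>carrier := N\<rparr>" "L \<noteq> {\<one>}"
  shows "\<exists>T. minimal_normal (G\<lparr>carrier := N\<rparr>) T \<and> T \<subseteq> L"
proof -
  define S where "S = {T. T \<lhd> G\<lparr>carrier := N\<rparr> \<and> T \<noteq> {\<one>} \<and> T \<subseteq> L}"
  have "L \<in> S" unfolding S_def using assms by blast
  then obtain T where T: "T \<in> S" and Tm: "\<And>T'. T' \<in> S \<Longrightarrow> card T \<le> card T'"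
    using ex_has_least_nat[of "\<lambda>T. T \<in> S" L card] by blast
  have TL: "T \<subseteq> L" using T unfolding S_def by simp
  have TN: "T \<lhd> G\<lparr>carrier := N\<rparr>" using T unfolding S_def by simp
  have T1: "T \<noteq> {\<one>}" using T unfolding S_def by simp
  have LN: "L \<subseteq> N" using iffD1[OF normal_sub_iff[OF assms(1)] assms(3)] by (elim conjE)
  have finT: "finite T" using LN TL assms(2) by (metis finite_subset)
  have "minimal_normal (G\<lparr>carrier := N\<rparr>) T"
    unfolding minimal_normal_def
  proof (intro conjI allI impI)
    show "T \<lhd> G\<lparr>carrier := N\<rparr>" "T \<noteq> {\<one>\<^bsub>G\<lparr>carrier := N\<rparr>\<^esub>}" using TN T1 by simp_all
  next
    fix K assume K: "K \<lhd> G\<lparr>carrier := N\<rparr> \<and> K \<subseteq> T"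
    show "K = {\<one>\<^bsub>G\<lparr>carrier := N\<rparr>\<^esub>} \<or> K = T"
    proof (cases "K = {\<one>}")
      case False
      have "K \<subseteq> L" using K TL by blast
      then have "K \<in> S" using K False unfolding S_def by simp
      then have "card T \<le> card K" by (rule Tm)
      then have "K = T" using K card_seteq[OF finT, of K] by blast
      then show ?thesis by simp
    qed simp
  qed
  then show ?thesis using TL by blast
qed

lemma min_normal_commute:
  assumes "minimal_normal G T" "minimal_normal G T'" "T \<noteq> T'" "x \<in> T" "y \<in> T'"
  shows "x \<otimes> y = y \<otimes> x"
proof -
  have nT: "T \<lhd> G" and nT': "T' \<lhd> G" using assms(1,2) minimal_normal_def by auto
  have sT: "subgroup T G" "subgroup T' G" using nT nT' normal_imp_subgroup by auto
  have c: "T \<subseteq> carrier G" "T' \<subseteq> carrier G" using sT subgroup.subset by auto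
  have "T \<inter> T' \<lhd> G"
    using nT nT' sT subgroups_Inter_pair[OF sT] unfolding normal_inv_iff by blast
  then have "T \<inter> T' = {\<one>} \<or> T \<inter> T' = T" using assms(1) unfolding minimal_normal_def by blast
  moreover have "T \<inter> T' \<noteq> T"
  proof
    assume "T \<inter> T' = T"
    then have "T \<subseteq> T'" by blast
    then have "T = {\<one>} \<or> T = T'" using assms(2) nT unfolding minimal_normal_def by blast
    then show False using assms(1,3) unfolding minimal_normal_def by blast
  qed
  ultimately have I: "T \<inter> T' = {\<one>}" by blast
  have xc: "x \<in> carrier G" and yc: "y \<in> carrier G" using c assms(4,5) by auto
  have "x \<otimes> y \<otimes> inv x \<in> T'" using normal.inv_op_closed2[OF nT' xc assms(5)] .
  then have a1: "x \<otimes> y \<otimes> inv x \<otimes> inv y \<in> T'"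
    using subgroup.m_closed[OF sT(2) _ subgroup.m_inv_closed[OF sT(2) assms(5)]] by blast
  have "y \<otimes> inv x \<otimes> inv y \<in> T" using normal.inv_op_closed2[OF nT yc subgroup.m_inv_closed[OF sT(1) assms(4)]] .
  then have "x \<otimes> (y \<otimes> inv x \<otimes> inv y) \<in> T"
    using subgroup.m_closed[OF sT(1) assms(4)] by blast
  then have "x \<otimes> y \<otimes> inv x \<otimes> inv y \<in> T" using xc yc by (simp add: m_assoc)
  with a1 I have "x \<otimes> y \<otimes> inv x \<otimes> inv y = \<one>" by blast
  then have "x \<otimes> y \<otimes> inv x \<otimes> inv y \<otimes> y \<otimes> x = y \<otimes> x" using xc yc by simp
  then show ?thesis using xc yc by (simp add: m_assoc)
qed

lemma commute_generate1:
  assumes "y \<in> carrier G" "U \<subseteq> carrier G" "\<forall>x\<in>U. x \<otimes> y = y \<otimes> x" "a \<in> generate G U"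
  shows "a \<otimes> y = y \<otimes> a"
  using assms(4)
proof (induction a rule: generate.induct)
  case one then show ?case using assms(1) by simp
next
  case (incl h) then show ?case using assms by blast
next
  case (inv h)
  have hc: "h \<in> carrier G" using inv assms(2) by blast
  have eq: "h \<otimes> y = y \<otimes> h" using inv assms by blast
  have "inv h \<otimes> y = inv h \<otimes> (y \<otimes> h) \<otimes> inv h" using hc assms(1) by (simp add: m_assoc)
  also have "... = inv h \<otimes> (h \<otimes> y) \<otimes> inv h" using eq by simp
  also have "... = y \<otimes> inv h" using hc assms(1) by (simp add: m_assoc[symmetric])
  finally show ?case .
next
  case (eng h1 h2)
  have c: "h1 \<in> carrier G" "h2 \<in> carrier G" using eng generate_in_carrier assms(2) by auto
  have "h1 \<otimes> h2 \<otimes> y = h1 \<otimes> (h2 \<otimes> y)" using c assms(1) by (simp add: m_assoc)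
  also have "... = h1 \<otimes> (y \<otimes> h2)" using eng by simp
  also have "... = (h1 \<otimes> y) \<otimes> h2" using c assms(1) by (simp add: m_assoc)
  also have "... = y \<otimes> (h1 \<otimes> h2)" using eng c assms(1) by (simp add: m_assoc)
  finally show ?case .
qed

lemma commute_generate:
  assumes "U \<subseteq> carrier G" "V \<subseteq> carrier G" "\<forall>x\<in>U. \<forall>y\<in>V. x \<otimes> y = y \<otimes> x"
    "a \<in> generate G U" "b \<in> generate G V"
  shows "a \<otimes> b = b \<otimes> a"
proof -
  have ac: "a \<in> carrier G" using assms generate_in_carrier by blast
  have "\<forall>y\<in>V. y \<otimes> a = a \<otimes> y"
    using commute_generate1[OF _ assms(1) _ assms(4)] assms(2,3) by (metis subsetD)
  then have "b \<otimes> a = a \<otimes> b" using commute_generate1[OF ac assms(2) _ assms(5)] by blast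
  then show ?thesis by simp
qed

lemma generate_union_gen:
  assumes "\<And>i. i \<in> Q \<Longrightarrow> A i \<subseteq> carrier G"
  shows "generate G (\<Union>i\<in>Q. A i) = generate G (\<Union>i\<in>Q. generate G (A i))"
proof
  show "generate G (\<Union>i\<in>Q. A i) \<subseteq> generate G (\<Union>i\<in>Q. generate G (A i))"
    by (rule mono_generate) (auto intro: generate.incl)
next
  have c: "(\<Union>i\<in>Q. A i) \<subseteq> carrier G" using assms by blast
  have "(\<Union>i\<in>Q. generate G (A i)) \<subseteq> generate G (\<Union>i\<in>Q. A i)"
    using mono_generate[of _ "\<Union>i\<in>Q. A i"] by blast
  then show "generate G (\<Union>i\<in>Q. generate G (A i)) \<subseteq> generate G (\<Union>i\<in>Q. A i)"
    using generate_subgroup_incl[OF _ generate_is_subgroup[OF c]] by blast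
qed

lemma set_mult_memI: "h \<in> H \<Longrightarrow> k \<in> K \<Longrightarrow> h \<otimes> k \<in> H <#> K"
  unfolding set_mult_def by blast

lemma set_mult_memE: "x \<in> H <#> K \<Longrightarrow> (\<And>h k. h \<in> H \<Longrightarrow> k \<in> K \<Longrightarrow> x = h \<otimes> k \<Longrightarrow> P) \<Longrightarrow> P"
  unfolding set_mult_def by blast

lemma generate_commuting_subgroups:
  assumes "subgroup A G" "subgroup B G" "\<forall>a\<in>A. \<forall>b\<in>B. a \<otimes> b = b \<otimes> a"
  shows "generate G (A \<union> B) = A <#> B"
proof
  have Ac: "A \<subseteq> carrier G" and Bc: "B \<subseteq> carrier G" using subgroup.subset[OF assms(1)] subgroup.subset[OF assms(2)] by auto
  have sg: "subgroup (A <#> B) G"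
  proof (rule subgroupI)
    show "A <#> B \<subseteq> carrier G" using Ac Bc unfolding set_mult_def by auto
    show "A <#> B \<noteq> {}" using assms unfolding set_mult_def using subgroup.one_closed by blast
  next
    fix x assume "x \<in> A <#> B"
    then obtain a b where ab: "a \<in> A" "b \<in> B" "x = a \<otimes> b" by (rule set_mult_memE)
    have c: "a \<in> carrier G" "b \<in> carrier G" using ab Ac Bc by auto
    have "inv x = inv b \<otimes> inv a" using ab c by (simp add: inv_mult_group)
    also have "... = inv a \<otimes> inv b" using assms(3)[rule_format, OF subgroup.m_inv_closed[OF assms(1) ab(1)] subgroup.m_inv_closed[OF assms(2) ab(2)]] by (rule sym)
    finally have "inv x = inv a \<otimes> inv b" .
    then show "inv x \<in> A <#> B"
      using set_mult_memI[OF subgroup.m_inv_closed[OF assms(1) ab(1)] subgroup.m_inv_closed[OF assms(2) ab(2)]] by simp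
  next
    fix x y assume "x \<in> A <#> B" "y \<in> A <#> B"
    then obtain a b a' b' where ab: "a \<in> A" "b \<in> B" "x = a \<otimes> b" "a' \<in> A" "b' \<in> B" "y = a' \<otimes> b'"
      by (metis set_mult_memE)
    have c: "a \<in> carrier G" "b \<in> carrier G" "a' \<in> carrier G" "b' \<in> carrier G" using ab Ac Bc by auto
    have "x \<otimes> y = a \<otimes> (b \<otimes> a') \<otimes> b'" using ab c by (simp add: m_assoc)
    also have "... = a \<otimes> (a' \<otimes> b) \<otimes> b'" using assms(3)[rule_format, OF ab(4) ab(2)] by simp
    also have "... = (a \<otimes> a') \<otimes> (b \<otimes> b')" using c by (simp add: m_assoc)
    finally have "x \<otimes> y = (a \<otimes> a') \<otimes> (b \<otimes> b')" .
    then show "x \<otimes> y \<in> A <#> B"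
      using set_mult_memI[OF subgroup.m_closed[OF assms(1) ab(1) ab(4)] subgroup.m_closed[OF assms(2) ab(2) ab(5)]] by simp
  qed
  have "A \<union> B \<subseteq> A <#> B"
  proof
    fix x assume "x \<in> A \<union> B"
    then show "x \<in> A <#> B"
    proof
      assume xa: "x \<in> A" then have "x = x \<otimes> \<one>" using Ac by auto
      then show "x \<in> A <#> B" using set_mult_memI[OF xa subgroup.one_closed[OF assms(2)]] by simp
    next
      assume xb: "x \<in> B" then have "x = \<one> \<otimes> x" using Bc by auto
      then show "x \<in> A <#> B" using set_mult_memI[OF subgroup.one_closed[OF assms(1)] xb] by simp
    qed
  qed
  then show "generate G (A \<union> B) \<subseteq> A <#> B" using generate_subgroup_incl[OF _ sg] by blast
next
  show "A <#> B \<subseteq> generate G (A \<union> B)"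
  proof
    fix x assume "x \<in> A <#> B"
    then obtain a b where ab: "a \<in> A" "b \<in> B" "x = a \<otimes> b" by (rule set_mult_memE)
    have "a \<in> generate G (A \<union> B)" using ab(1) by (intro generate.incl) blast
    moreover have "b \<in> generate G (A \<union> B)" using ab(2) by (intro generate.incl) blast
    ultimately have "a \<otimes> b \<in> generate G (A \<union> B)" by (rule generate.eng)
    then show "x \<in> generate G (A \<union> B)" using ab(3) by simp
  qed
qed

lemma cancel_l [simp]: "g \<in> carrier G \<Longrightarrow> z \<in> carrier G \<Longrightarrow> inv g \<otimes> (g \<otimes> z) = z"
  by (simp add: m_assoc[symmetric])

lemma cancel_r [simp]: "g \<in> carrier G \<Longrightarrow> z \<in> carrier G \<Longrightarrow> g \<otimes> (inv g \<otimes> z) = z"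
  by (simp add: m_assoc[symmetric])

lemma cj_mult: "g \<in> carrier G \<Longrightarrow> x \<in> carrier G \<Longrightarrow> y \<in> carrier G \<Longrightarrow>
    g \<otimes> x \<otimes> inv g \<otimes> (g \<otimes> y \<otimes> inv g) = g \<otimes> (x \<otimes> y) \<otimes> inv g"
  by (simp add: m_assoc)

lemma cj_inv: "g \<in> carrier G \<Longrightarrow> x \<in> carrier G \<Longrightarrow> inv (g \<otimes> x \<otimes> inv g) = g \<otimes> inv x \<otimes> inv g"
  by (simp add: m_assoc inv_mult_group)

lemma cj_back: "g \<in> carrier G \<Longrightarrow> x \<in> carrier G \<Longrightarrow> inv g \<otimes> (g \<otimes> x \<otimes> inv g) \<otimes> inv (inv g) = x"
  by (simp add: m_assoc)

lemma cj_back2: "g \<in> carrier G \<Longrightarrow> x \<in> carrier G \<Longrightarrow> g \<otimes> (inv g \<otimes> x \<otimes> inv (inv g)) \<otimes> inv g = x"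
  by (simp add: m_assoc)

lemma conj_normal_sub:
  assumes N: "N \<lhd> G" and g: "g \<in> carrier G" and K: "K \<lhd> G\<lparr>carrier := N\<rparr>"
  shows "(\<lambda>x. g \<otimes> x \<otimes> inv g) ` K \<lhd> G\<lparr>carrier := N\<rparr>"
proof -
  have sN: "subgroup N G" using N normal_imp_subgroup by blast
  have Kp: "subgroup K G" "K \<subseteq> N" "\<forall>n\<in>N. \<forall>k\<in>K. n \<otimes> k \<otimes> inv n \<in> K"
    using iffD1[OF normal_sub_iff[OF sN] K] by auto
  have Kc: "K \<subseteq> carrier G" using subgroup.subset[OF Kp(1)] .
  let ?I = "(\<lambda>x. g \<otimes> x \<otimes> inv g) ` K"
  have sI: "subgroup ?I G"
  proof (rule subgroupI)
    show "?I \<subseteq> carrier G" using Kc g by auto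
    show "?I \<noteq> {}" using subgroup.one_closed[OF Kp(1)] by blast
  next
    fix a assume "a \<in> ?I"
    then obtain x where x: "x \<in> K" "a = g \<otimes> x \<otimes> inv g" by blast
    have xc: "x \<in> carrier G" using x(1) Kc by auto
    have "inv a = g \<otimes> inv x \<otimes> inv g" using x(2) cj_inv[OF g xc] by simp
    then show "inv a \<in> ?I" using subgroup.m_inv_closed[OF Kp(1) x(1)] by blast
  next
    fix a b assume "a \<in> ?I" "b \<in> ?I"
    then obtain x y where x: "x \<in> K" "a = g \<otimes> x \<otimes> inv g" and y: "y \<in> K" "b = g \<otimes> y \<otimes> inv g" by blast
    have xc: "x \<in> carrier G" "y \<in> carrier G" using x(1) y(1) Kc by auto
    have "a \<otimes> b = g \<otimes> (x \<otimes> y) \<otimes> inv g" using x(2) y(2) cj_mult[OF g xc] by simp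
    then show "a \<otimes> b \<in> ?I" using subgroup.m_closed[OF Kp(1) x(1) y(1)] by blast
  qed
  have IN: "?I \<subseteq> N"
  proof
    fix a assume "a \<in> ?I"
    then obtain x where x: "x \<in> K" "a = g \<otimes> x \<otimes> inv g" by blast
    have "x \<in> N" using x(1) Kp(2) by auto
    then show "a \<in> N" using x(2) normal.inv_op_closed2[OF N g] by simp
  qed
  have inv: "\<forall>n\<in>N. \<forall>k\<in>?I. n \<otimes> k \<otimes> inv n \<in> ?I"
  proof (intro ballI)
    fix n k assume n: "n \<in> N" and "k \<in> ?I"
    then obtain x where x: "x \<in> K" "k = g \<otimes> x \<otimes> inv g" by blast
    have xc: "x \<in> carrier G" using x(1) Kc by auto
    have nc: "n \<in> carrier G" using n subgroup.subset[OF sN] by auto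
    define n' where "n' = inv g \<otimes> n \<otimes> g"
    have n'N: "n' \<in> N" using normal.inv_op_closed1[OF N g n] n'_def by simp
    have n'c: "n' \<in> carrier G" using n'N subgroup.subset[OF sN] by auto
    have nn: "n = g \<otimes> n' \<otimes> inv g" using n'_def g nc by (simp add: m_assoc)
    have "n \<otimes> k \<otimes> inv n = g \<otimes> (n' \<otimes> x \<otimes> inv n') \<otimes> inv g"
      unfolding nn x(2) using g xc n'c by (simp add: m_assoc inv_mult_group)
    moreover have "n' \<otimes> x \<otimes> inv n' \<in> K" using Kp(3) n'N x(1) by blast
    ultimately show "n \<otimes> k \<otimes> inv n \<in> ?I" by blast
  qed
  show ?thesis using iffD2[OF normal_sub_iff[OF sN]] sI IN inv by blast
qed

lemma conj_min_normal:
  assumes N: "N \<lhd> G" and g: "g \<in> carrier G" and T: "minimal_normal (G\<lparr>carrier := N\<rparr>) T"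
  shows "minimal_normal (G\<lparr>carrier := N\<rparr>) ((\<lambda>x. g \<otimes> x \<otimes> inv g) ` T)"
proof -
  have sN: "subgroup N G" using N normal_imp_subgroup by blast
  have TN: "T \<lhd> G\<lparr>carrier := N\<rparr>" and T1: "T \<noteq> {\<one>}"
    and Tm: "\<And>K. K \<lhd> G\<lparr>carrier := N\<rparr> \<Longrightarrow> K \<subseteq> T \<Longrightarrow> K = {\<one>} \<or> K = T"
    using T unfolding minimal_normal_def by auto
  have Tp: "subgroup T G" "T \<subseteq> N" using iffD1[OF normal_sub_iff[OF sN] TN] by auto
  have Tc: "T \<subseteq> carrier G" using subgroup.subset[OF Tp(1)] .
  have ig: "inv g \<in> carrier G" using g by simp
  let ?I = "(\<lambda>x. g \<otimes> x \<otimes> inv g) ` T"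
  have IN: "?I \<lhd> G\<lparr>carrier := N\<rparr>" by (rule conj_normal_sub[OF N g TN])
  have I1: "?I \<noteq> {\<one>}"
  proof
    assume a: "?I = {\<one>}"
    have "T \<subseteq> {\<one>}"
    proof
      fix t assume t: "t \<in> T"
      then have tc: "t \<in> carrier G" using Tc by auto
      have "g \<otimes> t \<otimes> inv g = \<one>" using a t by blast
      then have "inv g \<otimes> (g \<otimes> t \<otimes> inv g) \<otimes> inv (inv g) = \<one>" using g by simp
      then show "t \<in> {\<one>}" using cj_back[OF g tc] by simp
    qed
    then show False using T1 subgroup.one_closed[OF Tp(1)] by blast
  qed
  have min: "\<And>K. K \<lhd> G\<lparr>carrier := N\<rparr> \<Longrightarrow> K \<subseteq> ?I \<Longrightarrow> K = {\<one>} \<or> K = ?I"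
  proof -
    fix K assume K: "K \<lhd> G\<lparr>carrier := N\<rparr>" and KI: "K \<subseteq> ?I"
    have Kc: "K \<subseteq> carrier G" using iffD1[OF normal_sub_iff[OF sN] K] subgroup.subset by blast
    let ?K' = "(\<lambda>x. inv g \<otimes> x \<otimes> inv (inv g)) ` K"
    have K'N: "?K' \<lhd> G\<lparr>carrier := N\<rparr>" by (rule conj_normal_sub[OF N ig K])
    have K'T: "?K' \<subseteq> T"
    proof
      fix a assume "a \<in> ?K'"
      then obtain x where x: "x \<in> K" "a = inv g \<otimes> x \<otimes> inv (inv g)" by blast
      obtain t where t: "t \<in> T" "x = g \<otimes> t \<otimes> inv g" using x(1) KI by blast
      have "a = t" using x(2) t(2) cj_back[OF g] t(1) Tc by auto
      then show "a \<in> T" using t(1) by simp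
    qed
    have Kbk: "K = (\<lambda>x. g \<otimes> x \<otimes> inv g) ` ?K'"
    proof -
      have "(\<lambda>x. g \<otimes> x \<otimes> inv g) ` ?K' = (\<lambda>x. g \<otimes> (inv g \<otimes> x \<otimes> inv (inv g)) \<otimes> inv g) ` K"
        by (simp add: image_image)
      also have "... = (\<lambda>x. x) ` K"
        by (rule image_cong) (use Kc cj_back2[OF g] in auto)
      finally show ?thesis by simp
    qed
    from Tm[OF K'N K'T] show "K = {\<one>} \<or> K = ?I"
    proof
      assume "?K' = {\<one>}"
      then have "K = {g \<otimes> \<one> \<otimes> inv g}" using Kbk by simp
      then show ?thesis using g by simp
    next
      assume "?K' = T"
      then show ?thesis using Kbk by simp
    qed
  qed
  show ?thesis unfolding minimal_normal_def using IN I1 min by auto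
qed

lemma abelian_conj:
  assumes g: "g \<in> carrier G" and Tc: "T \<subseteq> carrier G" and ab: "abelian_set G T"
  shows "abelian_set G ((\<lambda>x. g \<otimes> x \<otimes> inv g) ` T)"
  unfolding abelian_set_def
proof (intro ballI)
  fix a b assume "a \<in> (\<lambda>x. g \<otimes> x \<otimes> inv g) ` T" "b \<in> (\<lambda>x. g \<otimes> x \<otimes> inv g) ` T"
  then obtain x y where x: "x \<in> T" "a = g \<otimes> x \<otimes> inv g" and y: "y \<in> T" "b = g \<otimes> y \<otimes> inv g" by blast
  have c: "x \<in> carrier G" "y \<in> carrier G" using x y Tc by auto
  have "x \<otimes> y = y \<otimes> x" using ab x(1) y(1) unfolding abelian_set_def by blast
  then show "a \<otimes> b = b \<otimes> a" using x(2) y(2) cj_mult[OF g c] cj_mult[OF g c(2) c(1)] by simp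
qed

lemma no_abelian_factor:
  assumes mN: "minimal_normal G N" and nab: "\<not> abelian_set G N"
    and T: "minimal_normal (G\<lparr>carrier := N\<rparr>) T"
  shows "\<not> abelian_set G T"
proof
  assume abT: "abelian_set G T"
  have N: "N \<lhd> G" using mN unfolding minimal_normal_def by blast
  have sN: "subgroup N G" using N normal_imp_subgroup by blast
  have Nc: "N \<subseteq> carrier G" using subgroup.subset[OF sN] .
  interpret H: group "G\<lparr>carrier := N\<rparr>" using subgroup_imp_group[OF sN] .
  define AA where "AA = {T. minimal_normal (G\<lparr>carrier := N\<rparr>) T \<and> abelian_set G T}"
  define U where "U = \<Union>AA"
  have facN: "\<And>T'. minimal_normal (G\<lparr>carrier := N\<rparr>) T' \<Longrightarrow> T' \<subseteq> N"
  proof -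
    fix T' assume "minimal_normal (G\<lparr>carrier := N\<rparr>) T'"
    then have "T' \<lhd> G\<lparr>carrier := N\<rparr>" unfolding minimal_normal_def by blast
    then show "T' \<subseteq> N" using iffD1[OF normal_sub_iff[OF sN]] by blast
  qed
  have UN: "U \<subseteq> N" unfolding U_def AA_def using facN by blast
  have Uc: "U \<subseteq> carrier G" using UN Nc by blast
  have conjU: "\<And>h g. h \<in> U \<Longrightarrow> g \<in> carrier G \<Longrightarrow> g \<otimes> h \<otimes> inv g \<in> U"
  proof -
    fix h g assume h: "h \<in> U" and g: "g \<in> carrier G"
    then obtain T' where T': "T' \<in> AA" "h \<in> T'" unfolding U_def by blast
    have T'm: "minimal_normal (G\<lparr>carrier := N\<rparr>) T'" and T'a: "abelian_set G T'" using T'(1) unfolding AA_def by auto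
    have T'c: "T' \<subseteq> carrier G" using facN[OF T'm] Nc by blast
    have "(\<lambda>x. g \<otimes> x \<otimes> inv g) ` T' \<in> AA"
      unfolding AA_def using conj_min_normal[OF N g T'm] abelian_conj[OF g T'c T'a] by blast
    moreover have "g \<otimes> h \<otimes> inv g \<in> (\<lambda>x. g \<otimes> x \<otimes> inv g) ` T'" using T'(2) by blast
    ultimately show "g \<otimes> h \<otimes> inv g \<in> U" unfolding U_def by blast
  qed
  have nU: "generate G U \<lhd> G" by (rule normal_generateI[OF Uc conjU])
  have gUN: "generate G U \<subseteq> N" by (rule generate_subgroup_incl[OF UN sN])
  have TU: "T \<subseteq> U" unfolding U_def AA_def using T abT by blast
  have T1: "T \<noteq> {\<one>}" using T unfolding minimal_normal_def by simp
  have oneT: "\<one> \<in> T"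
  proof -
    have "T \<lhd> G\<lparr>carrier := N\<rparr>" using T unfolding minimal_normal_def by blast
    then have "subgroup T G" using iffD1[OF normal_sub_iff[OF sN]] by blast
    then show ?thesis by (rule subgroup.one_closed)
  qed
  have "generate G U \<noteq> {\<one>}"
  proof
    assume "generate G U = {\<one>}"
    then have "T \<subseteq> {\<one>}" using TU generate.incl[of _ U G] by blast
    then show False using T1 oneT by blast
  qed
  then have gU: "generate G U = N" using mN nU gUN unfolding minimal_normal_def by blast
  have comm: "\<forall>x\<in>U. \<forall>y\<in>U. x \<otimes> y = y \<otimes> x"
  proof (intro ballI)
    fix x y assume "x \<in> U" "y \<in> U"
    then obtain T1 T2 where T12: "T1 \<in> AA" "x \<in> T1" "T2 \<in> AA" "y \<in> T2" unfolding U_def by blast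
    show "x \<otimes> y = y \<otimes> x"
    proof (cases "T1 = T2")
      case True
      then show ?thesis using T12 unfolding AA_def abelian_set_def by blast
    next
      case False
      have "x \<otimes>\<^bsub>G\<lparr>carrier := N\<rparr>\<^esub> y = y \<otimes>\<^bsub>G\<lparr>carrier := N\<rparr>\<^esub> x"
        using H.min_normal_commute[OF _ _ False T12(2) T12(4)] T12(1,3) unfolding AA_def by blast
      then show ?thesis by simp
    qed
  qed
  have "abelian_set G N"
    unfolding abelian_set_def gU[symmetric] using commute_generate[OF Uc Uc comm] by blast
  then show False using nab by blast
qed

end


lemma ga_group: "group_action G \<Omega> \<phi> \<Longrightarrow> group G"
  unfolding group_action_def group_hom_def by blast

lemma act_one:
  assumes "group_action G \<Omega> \<phi>" "x \<in> \<Omega>" shows "\<phi> \<one>\<^bsub>G\<^esub> x = x"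
proof -
  have "\<phi> \<one>\<^bsub>G\<^esub> = (\<lambda>x\<in>\<Omega>. x)" using group_action.id_eq_one[OF assms(1)] by simp
  then show ?thesis using assms(2) by simp
qed

lemma act_cl: "group_action G \<Omega> \<phi> \<Longrightarrow> g \<in> carrier G \<Longrightarrow> x \<in> \<Omega> \<Longrightarrow> \<phi> g x \<in> \<Omega>"
  using group_action.element_image[of G \<Omega> \<phi> g x "\<phi> g x"] by blast

lemma act_comp: "group_action G \<Omega> \<phi> \<Longrightarrow> g \<in> carrier G \<Longrightarrow> h \<in> carrier G \<Longrightarrow> x \<in> \<Omega> \<Longrightarrow>
   \<phi> (g \<otimes>\<^bsub>G\<^esub> h) x = \<phi> g (\<phi> h x)"
  using group_action.composition_rule[of G \<Omega> \<phi> x g h] by blast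

context group begin

lemma perfect_from_regular:
  assumes ga: "group_action G \<Omega> \<phi>" and a: "\<alpha> \<in> \<Omega>" and K: "subgroup K G"
    and inj: "\<And>k. k \<in> K \<Longrightarrow> \<phi> k \<alpha> = \<alpha> \<Longrightarrow> k = \<one>\<^bsub>G\<^esub>"
    and sur: "\<And>\<beta>. \<beta> \<in> \<Omega> \<Longrightarrow> \<exists>k\<in>K. \<phi> k \<alpha> = \<beta>"
  shows "perfect_code_of_group G (stabilizer G \<phi> \<alpha>)"
proof -
  have Kc: "K \<subseteq> carrier G" using subgroup.subset[OF K] .
  have one: "\<phi> \<one> \<alpha> = \<alpha>" using act_one[OF ga a] .
  define M where "M = stabilizer G \<phi> \<alpha>"
  have Mdef: "\<And>g. g \<in> M \<longleftrightarrow> g \<in> carrier G \<and> \<phi> g \<alpha> = \<alpha>" unfolding M_def stabilizer_def by simp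
  define S where "S = K - {\<one>}"
  have S1: "S \<subseteq> carrier G - {\<one>}" using Kc S_def by blast
  have S2: "\<forall>s\<in>S. inv s \<in> S"
  proof
    fix s assume s: "s \<in> S"
    then have sK: "s \<in> K" and s1: "s \<noteq> \<one>" using S_def by auto
    have "inv s \<in> K" using subgroup.m_inv_closed[OF K sK] .
    moreover have "inv s \<noteq> \<one>" using s1 sK Kc inv_eq_1_iff by auto
    ultimately show "inv s \<in> S" using S_def by simp
  qed
  have indep: "\<forall>c\<in>M. \<forall>c'\<in>M. c \<noteq> c' \<longrightarrow> \<not> cayley_adj G S c c'"
  proof (intro ballI impI notI)
    fix c c' assume c: "c \<in> M" and c': "c' \<in> M" and ne: "c \<noteq> c'" and adj: "cayley_adj G S c c'"
    then obtain s where s: "s \<in> S" "c' = s \<otimes> c" unfolding cayley_adj_def by blast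
    have sK: "s \<in> K" and s1: "s \<noteq> \<one>" using s(1) S_def by auto
    have sc: "s \<in> carrier G" using sK Kc by auto
    have cc: "c \<in> carrier G" "\<phi> c \<alpha> = \<alpha>" using c Mdef by auto
    have "\<phi> c' \<alpha> = \<alpha>" using c' Mdef by auto
    then have "\<phi> s (\<phi> c \<alpha>) = \<alpha>" using s(2) act_comp[OF ga sc cc(1) a] by simp
    then have "\<phi> s \<alpha> = \<alpha>" using cc(2) by simp
    then show False using inj[OF sK] s1 by simp
  qed
  have uniq: "\<forall>g\<in>carrier G - M. \<exists>!c. c \<in> M \<and> cayley_adj G S g c"
  proof
    fix g assume g: "g \<in> carrier G - M"
    have gc: "g \<in> carrier G" and gM: "g \<notin> M" using g by auto
    have b: "\<phi> g \<alpha> \<in> \<Omega>" using act_cl[OF ga gc a] .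
    obtain k where k: "k \<in> K" "\<phi> k \<alpha> = \<phi> g \<alpha>" using sur[OF b] by blast
    have kc: "k \<in> carrier G" using k(1) Kc by auto
    have ikK: "inv k \<in> K" using subgroup.m_inv_closed[OF K k(1)] .
    have k1: "k \<noteq> \<one>"
    proof
      assume "k = \<one>"
      then have "\<phi> g \<alpha> = \<alpha>" using k(2) one by simp
      then show False using gM gc Mdef by auto
    qed
    have ik1: "inv k \<noteq> \<one>" using k1 kc inv_eq_1_iff by auto
    have ikS: "inv k \<in> S" using ikK ik1 S_def by simp
    have P1: "inv k \<otimes> g \<in> M \<and> cayley_adj G S g (inv k \<otimes> g)"
    proof
      have "\<phi> (inv k \<otimes> g) \<alpha> = \<phi> (inv k) (\<phi> k \<alpha>)" using act_comp[OF ga _ gc a] kc k(2) by simp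
      also have "... = \<phi> (inv k \<otimes> k) \<alpha>" using act_comp[OF ga inv_closed[OF kc] kc a] by simp
      also have "... = \<alpha>" using kc one by simp
      finally show "inv k \<otimes> g \<in> M" using Mdef kc gc by simp
      show "cayley_adj G S g (inv k \<otimes> g)" unfolding cayley_adj_def using ikS by blast
    qed
    show "\<exists>!c. c \<in> M \<and> cayley_adj G S g c"
    proof (rule ex1I[of _ "inv k \<otimes> g"])
      show "inv k \<otimes> g \<in> M \<and> cayley_adj G S g (inv k \<otimes> g)" by (rule P1)
    next
      fix c assume c: "c \<in> M \<and> cayley_adj G S g c"
      then obtain s where s: "s \<in> S" "c = s \<otimes> g" unfolding cayley_adj_def by blast
      have sK: "s \<in> K" using s(1) S_def by auto
      have sc: "s \<in> carrier G" using sK Kc by auto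
      have "\<phi> c \<alpha> = \<alpha>" using c Mdef by auto
      then have "\<phi> s (\<phi> g \<alpha>) = \<alpha>" using s(2) act_comp[OF ga sc gc a] by simp
      then have "\<phi> s (\<phi> k \<alpha>) = \<alpha>" using k(2) by simp
      then have "\<phi> (s \<otimes> k) \<alpha> = \<alpha>" using act_comp[OF ga sc kc a] by simp
      then have "s \<otimes> k = \<one>" using inj subgroup.m_closed[OF K sK k(1)] by blast
      then have "inv k = s" using inv_equality[of s k] sc kc by simp
      then show "c = inv k \<otimes> g" using s(2) by simp
    qed
  qed
  have "perfect_code_cayley G S M"
    unfolding perfect_code_cayley_def proof (intro conjI)
    show "M \<subseteq> carrier G" using Mdef by blast
  qed (use indep uniq in auto)
  then show ?thesis unfolding perfect_code_of_group_def M_def using S1 S2 by blast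
qed

end


lemma G_finite:
  assumes ga: "group_action G \<Omega> \<phi>" and inj: "inj_on \<phi> (carrier G)" and fin: "finite \<Omega>"
  shows "finite (carrier G)"
proof -
  have "\<phi> ` carrier G \<subseteq> Bij \<Omega>" using group_action.bij_prop0[OF ga] by blast
  also have "Bij \<Omega> \<subseteq> PiE \<Omega> (\<lambda>_. \<Omega>)"
    using Bij_imp_extensional Bij_imp_funcset unfolding PiE_def by blast
  finally have "\<phi> ` carrier G \<subseteq> PiE \<Omega> (\<lambda>_. \<Omega>)" .
  moreover have "finite (PiE \<Omega> (\<lambda>_. \<Omega>))" by (rule finite_PiE) (use fin in auto)
  ultimately have "finite (\<phi> ` carrier G)" by (rule finite_subset)
  then show ?thesis by (rule finite_imageD[OF _ inj])
qed

context group begin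

lemma normal_transitive:
  assumes pa: "primitive_action G \<Omega> \<phi>" and N: "N \<lhd> G" and N1: "N \<noteq> {\<one>}" and a: "\<alpha> \<in> \<Omega>"
  shows "\<forall>\<beta>\<in>\<Omega>. \<exists>n\<in>N. \<phi> n \<alpha> = \<beta>"
proof -
  have ga: "group_action G \<Omega> \<phi>" and injp: "inj_on \<phi> (carrier G)"
    and tr: "\<forall>x\<in>\<Omega>. \<forall>y\<in>\<Omega>. \<exists>g\<in>carrier G. \<phi> g x = y"
    and blk: "\<forall>B. B \<subseteq> \<Omega> \<and> B \<noteq> {} \<and> (\<forall>g\<in>carrier G. \<phi> g ` B = B \<or> \<phi> g ` B \<inter> B = {})
          \<longrightarrow> (\<exists>x. B = {x}) \<or> B = \<Omega>"
    using pa unfolding primitive_action_def by auto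
  have sN: "subgroup N G" using N normal_imp_subgroup by blast
  have Nc: "N \<subseteq> carrier G" using subgroup.subset[OF sN] .
  have one: "\<phi> \<one> \<alpha> = \<alpha>" using act_one[OF ga a] .
  define B where "B = (\<lambda>n. \<phi> n \<alpha>) ` N"
  have BO: "B \<subseteq> \<Omega>" unfolding B_def using act_cl[OF ga _ a] Nc by blast
  have oneN: "\<one> \<in> N" using subgroup.one_closed[OF sN] .
  have aB: "\<alpha> \<in> B" unfolding B_def using oneN one by force
  have Bne: "B \<noteq> {}" using aB by blast
  have isblk: "\<forall>g\<in>carrier G. \<phi> g ` B = B \<or> \<phi> g ` B \<inter> B = {}"
  proof
    fix g assume gc: "g \<in> carrier G"
    show "\<phi> g ` B = B \<or> \<phi> g ` B \<inter> B = {}"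
    proof (cases "\<phi> g ` B \<inter> B = {}")
      case False
      then obtain n n' where n: "n \<in> N" and n': "n' \<in> N" and eq: "\<phi> g (\<phi> n \<alpha>) = \<phi> n' \<alpha>"
        unfolding B_def by blast
      have nc: "n \<in> carrier G" and n'c: "n' \<in> carrier G" using n n' Nc by auto
      have eq2: "\<phi> (g \<otimes> n) \<alpha> = \<phi> n' \<alpha>" using eq act_comp[OF ga gc nc a] by simp
      have "\<phi> g ` B = B"
      proof
        show "\<phi> g ` B \<subseteq> B"
        proof
          fix y assume "y \<in> \<phi> g ` B"
          then obtain m where m: "m \<in> N" "y = \<phi> g (\<phi> m \<alpha>)" unfolding B_def by blast
          have mc: "m \<in> carrier G" using m Nc by auto
          define z where "z = g \<otimes> (m \<otimes> inv n) \<otimes> inv g"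
          have zN: "z \<in> N" unfolding z_def
            using normal.inv_op_closed2[OF N gc subgroup.m_closed[OF sN m(1) subgroup.m_inv_closed[OF sN n]]] .
          have zc: "z \<in> carrier G" using zN Nc by auto
          have zz: "z \<otimes> (g \<otimes> n) = g \<otimes> m" unfolding z_def using gc mc nc by (simp add: m_assoc)
          have "\<phi> (z \<otimes> n') \<alpha> = \<phi> z (\<phi> n' \<alpha>)" using act_comp[OF ga zc n'c a] .
          also have "... = \<phi> z (\<phi> (g \<otimes> n) \<alpha>)" using eq2 by simp
          also have "... = \<phi> (z \<otimes> (g \<otimes> n)) \<alpha>" using act_comp[OF ga zc _ a] gc nc by simp
          also have "... = \<phi> g (\<phi> m \<alpha>)" using zz act_comp[OF ga gc mc a] by simp
          finally have "y = \<phi> (z \<otimes> n') \<alpha>" using m(2) by simp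
          moreover have "z \<otimes> n' \<in> N" using subgroup.m_closed[OF sN zN n'] .
          ultimately show "y \<in> B" unfolding B_def by blast
        qed
      next
        show "B \<subseteq> \<phi> g ` B"
        proof
          fix y assume "y \<in> B"
          then obtain m where m: "m \<in> N" "y = \<phi> m \<alpha>" unfolding B_def by blast
          have mc: "m \<in> carrier G" using m Nc by auto
          define w where "w = inv g \<otimes> (m \<otimes> inv n') \<otimes> inv (inv g) \<otimes> n"
          have wN: "w \<in> N" unfolding w_def
            using subgroup.m_closed[OF sN normal.inv_op_closed2[OF N inv_closed[OF gc] subgroup.m_closed[OF sN m(1) subgroup.m_inv_closed[OF sN n']]] n] .
          have wc: "w \<in> carrier G" using wN Nc by auto
          have ww: "g \<otimes> w = (m \<otimes> inv n') \<otimes> (g \<otimes> n)" unfolding w_def using gc mc nc n'c by (simp add: m_assoc)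
          have "\<phi> g (\<phi> w \<alpha>) = \<phi> (g \<otimes> w) \<alpha>" using act_comp[OF ga gc wc a] by simp
          also have "... = \<phi> (m \<otimes> inv n') (\<phi> (g \<otimes> n) \<alpha>)" using ww act_comp[OF ga _ _ a] gc mc nc n'c by simp
          also have "... = \<phi> (m \<otimes> inv n') (\<phi> n' \<alpha>)" using eq2 by simp
          also have "... = \<phi> (m \<otimes> inv n' \<otimes> n') \<alpha>" using act_comp[OF ga _ n'c a] mc n'c by simp
          also have "... = y" using m(2) mc n'c by (simp add: m_assoc)
          finally have "y = \<phi> g (\<phi> w \<alpha>)" by simp
          moreover have "\<phi> w \<alpha> \<in> B" unfolding B_def using wN by blast
          ultimately show "y \<in> \<phi> g ` B" by blast
        qed
      qed
      then show ?thesis by blast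
    qed simp
  qed
  have "(\<exists>x. B = {x}) \<or> B = \<Omega>" using blk BO Bne isblk by blast
  then show ?thesis
  proof
    assume "B = \<Omega>"
    then show ?thesis unfolding B_def by blast
  next
    assume "\<exists>x. B = {x}"
    then have Bs: "B = {\<alpha>}" using aB by blast
    have fix1: "\<And>n. n \<in> N \<Longrightarrow> \<phi> n \<alpha> = \<alpha>" using Bs unfolding B_def by blast
    have "N \<subseteq> {\<one>}"
    proof
      fix n assume n: "n \<in> N"
      have nc: "n \<in> carrier G" using n Nc by auto
      have "\<phi> n = \<phi> \<one>"
      proof (rule extensionalityI)
        show "\<phi> n \<in> extensional \<Omega>" using Bij_imp_extensional group_action.bij_prop0[OF ga nc] by blast
        show "\<phi> \<one> \<in> extensional \<Omega>" using Bij_imp_extensional group_action.bij_prop0[OF ga one_closed] by blast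
      next
        fix y assume y: "y \<in> \<Omega>"
        obtain g where g: "g \<in> carrier G" "\<phi> g \<alpha> = y" using tr a y by blast
        have m: "inv g \<otimes> n \<otimes> g \<in> N" using normal.inv_op_closed1[OF N g(1) n] .
        have mc: "inv g \<otimes> n \<otimes> g \<in> carrier G" using m Nc by auto
        have "\<phi> n y = \<phi> (n \<otimes> g) \<alpha>" using g act_comp[OF ga nc g(1) a] by simp
        also have "... = \<phi> (g \<otimes> (inv g \<otimes> n \<otimes> g)) \<alpha>" using g(1) nc by (simp add: m_assoc)
        also have "... = \<phi> g (\<phi> (inv g \<otimes> n \<otimes> g) \<alpha>)" using act_comp[OF ga g(1) mc a] .
        also have "... = y" using fix1[OF m] g(2) by simp
        finally show "\<phi> n y = \<phi> \<one> y" using act_one[OF ga y] by simp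
      qed
      then show "n \<in> {\<one>}" using inj_onD[OF injp] nc by blast
    qed
    then have "N = {\<one>}" using oneN by blast
    then show ?thesis using N1 by blast
  qed
qed

end


context group begin

lemma generate_empty_eq: "generate G {} = {\<one>}"
proof -
  have "{\<one>} = generate G {}" by (rule generateI[OF triv_subgroup]) (auto intro: subgroup.one_closed)
  then show ?thesis by simp
qed

lemma generate_Un2:
  assumes "A \<subseteq> carrier G" "B \<subseteq> carrier G"
  shows "generate G (A \<union> B) = generate G (generate G A \<union> generate G B)"
proof
  show "generate G (A \<union> B) \<subseteq> generate G (generate G A \<union> generate G B)"
    by (rule mono_generate) (auto intro: generate.incl)
next
  have c: "A \<union> B \<subseteq> carrier G" using assms by blast
  have "generate G A \<union> generate G B \<subseteq> generate G (A \<union> B)"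
    using mono_generate[of A "A \<union> B"] mono_generate[of B "A \<union> B"] by blast
  then show "generate G (generate G A \<union> generate G B) \<subseteq> generate G (A \<union> B)"
    by (rule generate_subgroup_incl[OF _ generate_is_subgroup[OF c]])
qed

lemma block_induct:
  assumes fin: "finite Q0"
    and sNf: "\<And>B. B \<in> Q0 \<Longrightarrow> subgroup (Nf B) G"
    and sCf: "\<And>B. B \<in> Q0 \<Longrightarrow> subgroup (Cf B) G"
    and sDf: "\<And>B. B \<in> Q0 \<Longrightarrow> subgroup (Df B) G"
    and CN: "\<And>B. B \<in> Q0 \<Longrightarrow> Cf B \<subseteq> Nf B"
    and DN: "\<And>B. B \<in> Q0 \<Longrightarrow> Df B \<subseteq> Nf B"
    and DC: "\<And>B. B \<in> Q0 \<Longrightarrow> Df B <#> Cf B = Nf B"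
    and DCi: "\<And>B. B \<in> Q0 \<Longrightarrow> Df B \<inter> Cf B = {\<one>}"
    and comm: "\<And>B B' x y. B \<in> Q0 \<Longrightarrow> B' \<in> Q0 \<Longrightarrow> B \<noteq> B' \<Longrightarrow> x \<in> Nf B \<Longrightarrow> y \<in> Nf B' \<Longrightarrow> x \<otimes> y = y \<otimes> x"
    and ind: "\<And>B Q'. B \<in> Q0 \<Longrightarrow> Q' \<subseteq> Q0 \<Longrightarrow> B \<notin> Q' \<Longrightarrow> Nf B \<inter> generate G (\<Union>(Nf ` Q')) = {\<one>}"
    and QQ: "Q \<subseteq> Q0"
  shows "generate G (\<Union>(Df ` Q)) <#> generate G (\<Union>(Cf ` Q)) = generate G (\<Union>(Nf ` Q)) \<and>
         generate G (\<Union>(Df ` Q)) \<inter> generate G (\<Union>(Cf ` Q)) = {\<one>}"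
proof -
  have finQ: "finite Q" using finite_subset[OF QQ fin] .
  have Nc: "\<And>B. B \<in> Q0 \<Longrightarrow> Nf B \<subseteq> carrier G" using sNf subgroup.subset by blast
  have Cc: "\<And>B. B \<in> Q0 \<Longrightarrow> Cf B \<subseteq> carrier G" using sCf subgroup.subset by blast
  have Dc: "\<And>B. B \<in> Q0 \<Longrightarrow> Df B \<subseteq> carrier G" using sDf subgroup.subset by blast
  show ?thesis using finQ QQ
  proof (induction Q rule: finite_subset_induct')
    case empty
    show ?case using generate_empty_eq by (auto simp: set_mult_def)
  next
    case (insert b F)
    note bQ = insert(2) and bF = insert(4) and FQ = insert(3)
    note IH = insert(5)
    define NF where "NF = generate G (\<Union>(Nf ` F))"
    define CF where "CF = generate G (\<Union>(Cf ` F))"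
    define DF where "DF = generate G (\<Union>(Df ` F))"
    have UNc: "\<Union>(Nf ` F) \<subseteq> carrier G" using Nc FQ by blast
    have UCc: "\<Union>(Cf ` F) \<subseteq> carrier G" using Cc FQ by blast
    have UDc: "\<Union>(Df ` F) \<subseteq> carrier G" using Dc FQ by blast
    have sNF: "subgroup NF G" unfolding NF_def by (rule generate_is_subgroup[OF UNc])
    have sCF: "subgroup CF G" unfolding CF_def by (rule generate_is_subgroup[OF UCc])
    have sDF: "subgroup DF G" unfolding DF_def by (rule generate_is_subgroup[OF UDc])
    have CFN: "CF \<subseteq> NF" unfolding CF_def NF_def using CN FQ by (intro mono_generate) blast
    have DFN: "DF \<subseteq> NF" unfolding DF_def NF_def using DN FQ by (intro mono_generate) blast
    have NFc: "NF \<subseteq> carrier G" using subgroup.subset[OF sNF] .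
    have IH1: "DF <#> CF = NF" and IH2: "DF \<inter> CF = {\<one>}" using IH unfolding NF_def CF_def DF_def by auto
    have bcomm: "\<And>x y. x \<in> Nf b \<Longrightarrow> y \<in> NF \<Longrightarrow> x \<otimes> y = y \<otimes> x"
    proof -
      fix x y assume x: "x \<in> Nf b" and y: "y \<in> NF"
      have xc: "x \<in> carrier G" using x Nc bQ by blast
      have "\<forall>u\<in>\<Union>(Nf ` F). u \<otimes> x = x \<otimes> u"
      proof
        fix u assume "u \<in> \<Union>(Nf ` F)"
        then obtain B' where B': "B' \<in> F" "u \<in> Nf B'" by blast
        have "B' \<noteq> b" using B'(1) bF by blast
        then show "u \<otimes> x = x \<otimes> u" using comm[OF _ bQ _ B'(2) x] B'(1) FQ by blast
      qed
      then have "y \<otimes> x = x \<otimes> y" using commute_generate1[OF xc UNc _ y[unfolded NF_def]] by blast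
      then show "x \<otimes> y = y \<otimes> x" by simp
    qed
    have gen_ins: "\<And>Xf. (\<And>B. B \<in> Q0 \<Longrightarrow> subgroup (Xf B) G) \<Longrightarrow>
        generate G (\<Union>(Xf ` insert b F)) = generate G (Xf b \<union> generate G (\<Union>(Xf ` F)))"
    proof -
      fix Xf assume sX: "\<And>B. B \<in> Q0 \<Longrightarrow> subgroup (Xf B) G"
      have c1: "Xf b \<subseteq> carrier G" using sX[OF bQ] subgroup.subset by blast
      have c2: "\<Union>(Xf ` F) \<subseteq> carrier G" using sX FQ subgroup.subset by blast
      have "generate G (\<Union>(Xf ` insert b F)) = generate G (Xf b \<union> \<Union>(Xf ` F))" by simp
      also have "... = generate G (generate G (Xf b) \<union> generate G (\<Union>(Xf ` F)))" by (rule generate_Un2[OF c1 c2])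
      also have "... = generate G (Xf b \<union> generate G (\<Union>(Xf ` F)))" using generate_subgroup_eq[OF sX[OF bQ]] by simp
      finally show "generate G (\<Union>(Xf ` insert b F)) = generate G (Xf b \<union> generate G (\<Union>(Xf ` F)))" .
    qed
    have N': "generate G (\<Union>(Nf ` insert b F)) = Nf b <#> NF"
    proof -
      have "generate G (\<Union>(Nf ` insert b F)) = generate G (Nf b \<union> NF)"
        unfolding NF_def by (rule gen_ins[OF sNf])
      also have "... = Nf b <#> NF"
        by (rule generate_commuting_subgroups[OF sNf[OF bQ] sNF]) (use bcomm in blast)
      finally show ?thesis .
    qed
    have C': "generate G (\<Union>(Cf ` insert b F)) = Cf b <#> CF"
    proof -
      have "generate G (\<Union>(Cf ` insert b F)) = generate G (Cf b \<union> CF)"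
        unfolding CF_def by (rule gen_ins[OF sCf])
      also have "... = Cf b <#> CF"
        by (rule generate_commuting_subgroups[OF sCf[OF bQ] sCF]) (use bcomm CN[OF bQ] CFN in blast)
      finally show ?thesis .
    qed
    have D': "generate G (\<Union>(Df ` insert b F)) = Df b <#> DF"
    proof -
      have "generate G (\<Union>(Df ` insert b F)) = generate G (Df b \<union> DF)"
        unfolding DF_def by (rule gen_ins[OF sDf])
      also have "... = Df b <#> DF"
        by (rule generate_commuting_subgroups[OF sDf[OF bQ] sDF]) (use bcomm DN[OF bQ] DFN in blast)
      finally show ?thesis .
    qed
    have eq1: "(Df b <#> DF) <#> (Cf b <#> CF) = Nf b <#> NF"
    proof
      show "(Df b <#> DF) <#> (Cf b <#> CF) \<subseteq> Nf b <#> NF"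
      proof
        fix x assume "x \<in> (Df b <#> DF) <#> (Cf b <#> CF)"
        then obtain u v where uv: "u \<in> Df b <#> DF" "v \<in> Cf b <#> CF" "x = u \<otimes> v" by (rule set_mult_memE)
        obtain db dF where d: "db \<in> Df b" "dF \<in> DF" "u = db \<otimes> dF" using uv(1) by (rule set_mult_memE)
        obtain cb cF where c: "cb \<in> Cf b" "cF \<in> CF" "v = cb \<otimes> cF" using uv(2) by (rule set_mult_memE)
        have cc: "db \<in> carrier G" "dF \<in> carrier G" "cb \<in> carrier G" "cF \<in> carrier G"
          using d c Dc[OF bQ] Cc[OF bQ] subgroup.subset[OF sDF] subgroup.subset[OF sCF] by auto
        have sw0: "cb \<otimes> dF = dF \<otimes> cb" using CN[OF bQ] c(1) DFN d(2) by (intro bcomm) blast+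
        then have sw: "dF \<otimes> cb = cb \<otimes> dF" by simp
        have "x = db \<otimes> (dF \<otimes> cb) \<otimes> cF" using uv(3) d(3) c(3) cc by (simp add: m_assoc)
        also have "... = db \<otimes> (cb \<otimes> dF) \<otimes> cF" using sw by simp
        also have "... = (db \<otimes> cb) \<otimes> (dF \<otimes> cF)" using cc by (simp add: m_assoc)
        finally have xe: "x = (db \<otimes> cb) \<otimes> (dF \<otimes> cF)" .
        have "db \<otimes> cb \<in> Nf b" using set_mult_memI[OF d(1) c(1)] DC[OF bQ] by simp
        moreover have "dF \<otimes> cF \<in> NF" using set_mult_memI[OF d(2) c(2)] IH1 by simp
        ultimately show "x \<in> Nf b <#> NF" using xe set_mult_memI by simp
      qed
    next
      show "Nf b <#> NF \<subseteq> (Df b <#> DF) <#> (Cf b <#> CF)"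
      proof
        fix x assume "x \<in> Nf b <#> NF"
        then obtain u v where uv: "u \<in> Nf b" "v \<in> NF" "x = u \<otimes> v" by (rule set_mult_memE)
        have "u \<in> Df b <#> Cf b" using uv(1) DC[OF bQ] by simp
        then obtain db cb where d: "db \<in> Df b" "cb \<in> Cf b" "u = db \<otimes> cb" by (rule set_mult_memE)
        have "v \<in> DF <#> CF" using uv(2) IH1 by simp
        then obtain dF cF where c: "dF \<in> DF" "cF \<in> CF" "v = dF \<otimes> cF" by (rule set_mult_memE)
        have cc: "db \<in> carrier G" "dF \<in> carrier G" "cb \<in> carrier G" "cF \<in> carrier G"
          using d c Dc[OF bQ] Cc[OF bQ] subgroup.subset[OF sDF] subgroup.subset[OF sCF] by auto
        have sw0: "cb \<otimes> dF = dF \<otimes> cb" using CN[OF bQ] d(2) DFN c(1) by (intro bcomm) blast+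
        then have sw: "dF \<otimes> cb = cb \<otimes> dF" by simp
        have "x = db \<otimes> (cb \<otimes> dF) \<otimes> cF" using uv(3) d(3) c(3) cc by (simp add: m_assoc)
        also have "... = db \<otimes> (dF \<otimes> cb) \<otimes> cF" using sw by simp
        also have "... = (db \<otimes> dF) \<otimes> (cb \<otimes> cF)" using cc by (simp add: m_assoc)
        finally have xe: "x = (db \<otimes> dF) \<otimes> (cb \<otimes> cF)" .
        show "x \<in> (Df b <#> DF) <#> (Cf b <#> CF)"
          using xe set_mult_memI[OF set_mult_memI[OF d(1) c(1)] set_mult_memI[OF d(2) c(2)]] by simp
      qed
    qed
    have eq2: "(Df b <#> DF) \<inter> (Cf b <#> CF) = {\<one>}"
    proof
      show "(Df b <#> DF) \<inter> (Cf b <#> CF) \<subseteq> {\<one>}"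
      proof
        fix x assume x: "x \<in> (Df b <#> DF) \<inter> (Cf b <#> CF)"
        obtain db dF where d: "db \<in> Df b" "dF \<in> DF" "x = db \<otimes> dF" using x by (blast elim: set_mult_memE)
        obtain cb cF where c: "cb \<in> Cf b" "cF \<in> CF" "x = cb \<otimes> cF" using x by (blast elim: set_mult_memE)
        have cc: "db \<in> carrier G" "dF \<in> carrier G" "cb \<in> carrier G" "cF \<in> carrier G"
          using d c Dc[OF bQ] Cc[OF bQ] subgroup.subset[OF sDF] subgroup.subset[OF sCF] by auto
        have e: "db \<otimes> dF = cb \<otimes> cF" using d(3) c(3) by simp
        have e2: "inv cb \<otimes> db = cF \<otimes> inv dF"
        proof -
          have "inv cb \<otimes> (db \<otimes> dF) \<otimes> inv dF = inv cb \<otimes> (cb \<otimes> cF) \<otimes> inv dF" using e by simp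
          then show ?thesis using cc by (simp add: m_assoc)
        qed
        have m1: "inv cb \<otimes> db \<in> Nf b"
          using subgroup.m_closed[OF sNf[OF bQ] subgroup.m_inv_closed[OF sNf[OF bQ]]] CN[OF bQ] DN[OF bQ] c(1) d(1) by blast
        have m2: "cF \<otimes> inv dF \<in> NF"
          using subgroup.m_closed[OF sNF _ subgroup.m_inv_closed[OF sNF]] CFN DFN c(2) d(2) by blast
        have "Nf b \<inter> NF = {\<one>}" unfolding NF_def using ind[OF bQ FQ bF] .
        moreover have "inv cb \<otimes> db \<in> Nf b \<inter> NF" using m1 m2 e2 by simp
        ultimately have i1: "inv cb \<otimes> db = \<one>" by simp
        have "db = cb \<otimes> (inv cb \<otimes> db)" using cc by simp
        then have dbcb: "db = cb" using i1 cc by simp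
        then have "db \<in> Df b \<inter> Cf b" using d(1) c(1) by simp
        then have db1: "db = \<one>" using DCi[OF bQ] by blast
        have i2: "cF \<otimes> inv dF = \<one>" using i1 e2 by simp
        have "cF = (cF \<otimes> inv dF) \<otimes> dF" using cc by (simp add: m_assoc)
        then have "cF = dF" using i2 cc by simp
        then have "dF \<in> DF \<inter> CF" using d(2) c(2) by simp
        then have "dF = \<one>" using IH2 by blast
        then show "x \<in> {\<one>}" using d(3) db1 by simp
      qed
    next
      show "{\<one>} \<subseteq> (Df b <#> DF) \<inter> (Cf b <#> CF)"
        using set_mult_memI[OF subgroup.one_closed[OF sDf[OF bQ]] subgroup.one_closed[OF sDF]]
              set_mult_memI[OF subgroup.one_closed[OF sCf[OF bQ]] subgroup.one_closed[OF sCF]] by simp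
    qed
    show ?case unfolding N' C' D' using eq1 eq2 by simp
  qed
qed

end


context group begin

lemma subgroup_conj:
  assumes K: "subgroup K G" and g: "g \<in> carrier G"
  shows "subgroup ((\<lambda>x. g \<otimes> x \<otimes> inv g) ` K) G"
proof -
  have Kc: "K \<subseteq> carrier G" using subgroup.subset[OF K] .
  let ?I = "(\<lambda>x. g \<otimes> x \<otimes> inv g) ` K"
  show ?thesis
  proof (rule subgroupI)
    show "?I \<subseteq> carrier G" using Kc g by auto
    show "?I \<noteq> {}" using subgroup.one_closed[OF K] by blast
  next
    fix a assume "a \<in> ?I"
    then obtain x where x: "x \<in> K" "a = g \<otimes> x \<otimes> inv g" by blast
    have xc: "x \<in> carrier G" using x(1) Kc by auto
    have "inv a = g \<otimes> inv x \<otimes> inv g" using x(2) cj_inv[OF g xc] by simp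
    then show "inv a \<in> ?I" using subgroup.m_inv_closed[OF K x(1)] by blast
  next
    fix a b assume "a \<in> ?I" "b \<in> ?I"
    then obtain x y where x: "x \<in> K" "a = g \<otimes> x \<otimes> inv g" and y: "y \<in> K" "b = g \<otimes> y \<otimes> inv g" by blast
    have xc: "x \<in> carrier G" "y \<in> carrier G" using x(1) y(1) Kc by auto
    have "a \<otimes> b = g \<otimes> (x \<otimes> y) \<otimes> inv g" using x(2) y(2) cj_mult[OF g xc] by simp
    then show "a \<otimes> b \<in> ?I" using subgroup.m_closed[OF K x(1) y(1)] by blast
  qed
qed

lemma regular_transfer:
  assumes ga: "group_action G \<Omega> \<phi>" and a': "\<alpha>' \<in> \<Omega>" and a: "\<alpha> \<in> \<Omega>"
    and g: "g \<in> carrier G" and ga': "\<phi> g \<alpha>' = \<alpha>" and sK: "subgroup K G"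
    and inj: "\<forall>k\<in>K. \<phi> k \<alpha>' = \<alpha>' \<longrightarrow> k = \<one>" and sur: "\<forall>\<beta>\<in>\<Omega>. \<exists>k\<in>K. \<phi> k \<alpha>' = \<beta>"
  shows "perfect_code_of_group G (stabilizer G \<phi> \<alpha>)"
proof -
  have Kc: "K \<subseteq> carrier G" using subgroup.subset[OF sK] .
  let ?K = "(\<lambda>x. g \<otimes> x \<otimes> inv g) ` K"
  have key: "\<And>k. k \<in> K \<Longrightarrow> \<phi> (g \<otimes> k \<otimes> inv g) \<alpha> = \<phi> g (\<phi> k \<alpha>')"
  proof -
    fix k assume k: "k \<in> K"
    have kc: "k \<in> carrier G" using k Kc by auto
    have "\<phi> (g \<otimes> k \<otimes> inv g) \<alpha> = \<phi> (g \<otimes> k \<otimes> inv g) (\<phi> g \<alpha>')" using ga' by simp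
    also have "... = \<phi> (g \<otimes> k \<otimes> inv g \<otimes> g) \<alpha>'" using act_comp[OF ga _ g a'] g kc by simp
    also have "... = \<phi> (g \<otimes> k) \<alpha>'" using g kc by (simp add: m_assoc)
    also have "... = \<phi> g (\<phi> k \<alpha>')" using act_comp[OF ga g kc a'] .
    finally show "\<phi> (g \<otimes> k \<otimes> inv g) \<alpha> = \<phi> g (\<phi> k \<alpha>')" .
  qed
  show ?thesis
  proof (rule perfect_from_regular[OF ga a subgroup_conj[OF sK g]])
    fix k' assume k': "k' \<in> ?K" and fx: "\<phi> k' \<alpha> = \<alpha>"
    then obtain k where k: "k \<in> K" "k' = g \<otimes> k \<otimes> inv g" by blast
    have kc: "k \<in> carrier G" using k Kc by auto
    have "\<phi> g (\<phi> k \<alpha>') = \<phi> g \<alpha>'" using fx k(2) key[OF k(1)] ga' by simp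
    moreover have "\<phi> k \<alpha>' \<in> \<Omega>" using act_cl[OF ga kc a'] .
    ultimately have "\<phi> k \<alpha>' = \<alpha>'" using inj_onD[OF group_action.inj_prop[OF ga g]] a' by blast
    then have "k = \<one>" using inj k(1) by blast
    then show "k' = \<one>" using k(2) g by simp
  next
    fix \<beta> assume b: "\<beta> \<in> \<Omega>"
    have b': "\<phi> (inv g) \<beta> \<in> \<Omega>" using act_cl[OF ga _ b] g by simp
    obtain k where k: "k \<in> K" "\<phi> k \<alpha>' = \<phi> (inv g) \<beta>" using sur b' by blast
    have "\<phi> (g \<otimes> k \<otimes> inv g) \<alpha> = \<phi> g (\<phi> (inv g) \<beta>)" using key[OF k(1)] k(2) by simp
    also have "... = \<phi> (g \<otimes> inv g) \<beta>" using act_comp[OF ga g inv_closed[OF g] b] by simp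
    also have "... = \<beta>" using act_one[OF ga b] g by simp
    finally show "\<exists>k\<in>?K. \<phi> k \<alpha> = \<beta>" using k(1) by blast
  qed
qed

lemma diag_regular:
  assumes ga: "group_action G \<Omega> \<phi>" and a: "\<alpha> \<in> \<Omega>" and sK: "subgroup K G" and KN: "K \<subseteq> N"
    and sN: "subgroup N G" and tr: "\<forall>\<beta>\<in>\<Omega>. \<exists>n\<in>N. \<phi> n \<alpha> = \<beta>"
    and DK: "(N \<inter> stabilizer G \<phi> \<alpha>) <#> K = N" and DKi: "(N \<inter> stabilizer G \<phi> \<alpha>) \<inter> K = {\<one>}"
  shows "(\<forall>k\<in>K. \<phi> k \<alpha> = \<alpha> \<longrightarrow> k = \<one>) \<and> (\<forall>\<beta>\<in>\<Omega>. \<exists>k\<in>K. \<phi> k \<alpha> = \<beta>)"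
proof (intro conjI ballI impI)
  fix k assume k: "k \<in> K" and fx: "\<phi> k \<alpha> = \<alpha>"
  have kc: "k \<in> carrier G" using k subgroup.subset[OF sK] by auto
  have "k \<in> (N \<inter> stabilizer G \<phi> \<alpha>) \<inter> K" using k KN fx kc unfolding stabilizer_def by auto
  then show "k = \<one>" using DKi by simp
next
  fix \<beta> assume b: "\<beta> \<in> \<Omega>"
  obtain n where n: "n \<in> N" "\<phi> n \<alpha> = \<beta>" using tr b by blast
  have "inv n \<in> N" using subgroup.m_inv_closed[OF sN n(1)] .
  then have "inv n \<in> (N \<inter> stabilizer G \<phi> \<alpha>) <#> K" using DK by simp
  then obtain d c where dc: "d \<in> N \<inter> stabilizer G \<phi> \<alpha>" "c \<in> K" "inv n = d \<otimes> c" by (rule set_mult_memE)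
  have dc': "d \<in> carrier G" "\<phi> d \<alpha> = \<alpha>" using dc(1) unfolding stabilizer_def by auto
  have cc: "c \<in> carrier G" using dc(2) subgroup.subset[OF sK] by auto
  have nc: "n \<in> carrier G" using n(1) subgroup.subset[OF sN] by auto
  have "n = inv (d \<otimes> c)" using dc(3) nc by (metis inv_inv)
  then have ne: "n = inv c \<otimes> inv d" using dc' cc by (simp add: inv_mult_group)
  have "\<phi> (inv d) \<alpha> = \<phi> (inv d) (\<phi> d \<alpha>)" using dc' by simp
  also have "... = \<phi> (inv d \<otimes> d) \<alpha>" using act_comp[OF ga inv_closed[OF dc'(1)] dc'(1) a] by (rule sym)
  also have "... = \<alpha>" using act_one[OF ga a] dc' by simp
  finally have fd: "\<phi> (inv d) \<alpha> = \<alpha>" .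
  have "\<beta> = \<phi> (inv c \<otimes> inv d) \<alpha>" using n(2) ne by simp
  also have "... = \<phi> (inv c) (\<phi> (inv d) \<alpha>)" using act_comp[OF ga inv_closed[OF cc] inv_closed[OF dc'(1)] a] .
  finally have "\<phi> (inv c) \<alpha> = \<beta>" using fd by simp
  then show "\<exists>k\<in>K. \<phi> k \<alpha> = \<beta>" using subgroup.m_inv_closed[OF sK dc(2)] by blast
qed

lemma centralizer_sub:
  assumes sN: "subgroup N G" and Tc: "T \<subseteq> carrier G"
  shows "subgroup (centralizer_in G N T) G" "centralizer_in G N T \<subseteq> N"
proof -
  have Nc: "N \<subseteq> carrier G" using subgroup.subset[OF sN] .
  show "centralizer_in G N T \<subseteq> N" unfolding centralizer_in_def by blast
  show "subgroup (centralizer_in G N T) G"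
  proof (rule subgroupI)
    show "centralizer_in G N T \<subseteq> carrier G" unfolding centralizer_in_def using Nc by blast
    have "\<one> \<in> centralizer_in G N T" unfolding centralizer_in_def using subgroup.one_closed[OF sN] Tc by auto
    then show "centralizer_in G N T \<noteq> {}" by blast
  next
    fix x assume x: "x \<in> centralizer_in G N T"
    have xN: "x \<in> N" and xt: "\<forall>t\<in>T. x \<otimes> t = t \<otimes> x" using x unfolding centralizer_in_def by auto
    have xc: "x \<in> carrier G" using xN Nc by auto
    have "\<forall>t\<in>T. inv x \<otimes> t = t \<otimes> inv x"
    proof
      fix t assume t: "t \<in> T"
      have tc: "t \<in> carrier G" using t Tc by auto
      have eq: "x \<otimes> t = t \<otimes> x" using xt t by blast
      have "inv x \<otimes> t = inv x \<otimes> (t \<otimes> x) \<otimes> inv x" using xc tc by (simp add: m_assoc)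
      also have "... = inv x \<otimes> (x \<otimes> t) \<otimes> inv x" using eq by simp
      also have "... = t \<otimes> inv x" using xc tc by (simp add: m_assoc[symmetric])
      finally show "inv x \<otimes> t = t \<otimes> inv x" .
    qed
    then show "inv x \<in> centralizer_in G N T" unfolding centralizer_in_def
      using subgroup.m_inv_closed[OF sN xN] by blast
  next
    fix x y assume x: "x \<in> centralizer_in G N T" and y: "y \<in> centralizer_in G N T"
    have xN: "x \<in> N" and xt: "\<forall>t\<in>T. x \<otimes> t = t \<otimes> x" using x unfolding centralizer_in_def by auto
    have yN: "y \<in> N" and yt: "\<forall>t\<in>T. y \<otimes> t = t \<otimes> y" using y unfolding centralizer_in_def by auto
    have c: "x \<in> carrier G" "y \<in> carrier G" using xN yN Nc by auto
    have "\<forall>t\<in>T. x \<otimes> y \<otimes> t = t \<otimes> (x \<otimes> y)"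
    proof
      fix t assume t: "t \<in> T"
      have tc: "t \<in> carrier G" using t Tc by auto
      have "x \<otimes> y \<otimes> t = x \<otimes> (y \<otimes> t)" using c tc by (simp add: m_assoc)
      also have "... = x \<otimes> (t \<otimes> y)" using yt t by simp
      also have "... = (x \<otimes> t) \<otimes> y" using c tc by (simp add: m_assoc)
      also have "... = (t \<otimes> x) \<otimes> y" using xt t by simp
      also have "... = t \<otimes> (x \<otimes> y)" using c tc by (simp add: m_assoc)
      finally show "x \<otimes> y \<otimes> t = t \<otimes> (x \<otimes> y)" .
    qed
    then show "x \<otimes> y \<in> centralizer_in G N T" unfolding centralizer_in_def
      using subgroup.m_closed[OF sN xN yN] by blast
  qed
qed

lemma gen_normal_H:
  assumes sN: "subgroup N G" and TT: "\<And>T. T \<in> TS \<Longrightarrow> T \<lhd> G\<lparr>carrier := N\<rparr>"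
  shows "generate G (\<Union>TS) \<lhd> G\<lparr>carrier := N\<rparr>"
proof -
  interpret H: group "G\<lparr>carrier := N\<rparr>" using subgroup_imp_group[OF sN] .
  have Tp: "\<And>T. T \<in> TS \<Longrightarrow> T \<subseteq> N \<and> (\<forall>n\<in>N. \<forall>k\<in>T. n \<otimes> k \<otimes> inv n \<in> T)"
    using iffD1[OF normal_sub_iff[OF sN] TT] by blast
  have UN: "\<Union>TS \<subseteq> N" using Tp by blast
  have "generate (G\<lparr>carrier := N\<rparr>) (\<Union>TS) \<lhd> G\<lparr>carrier := N\<rparr>"
  proof (rule H.normal_generateI)
    show "\<Union>TS \<subseteq> carrier (G\<lparr>carrier := N\<rparr>)" using UN by simp
  next
    fix h g assume h: "h \<in> \<Union>TS" and g: "g \<in> carrier (G\<lparr>carrier := N\<rparr>)"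
    then obtain T where T: "T \<in> TS" "h \<in> T" by blast
    have gN: "g \<in> N" using g by simp
    have "g \<otimes> h \<otimes> inv g \<in> T" using Tp[OF T(1)] gN T(2) by blast
    then show "g \<otimes>\<^bsub>G\<lparr>carrier := N\<rparr>\<^esub> h \<otimes>\<^bsub>G\<lparr>carrier := N\<rparr>\<^esub> inv\<^bsub>G\<lparr>carrier := N\<rparr>\<^esub> g \<in> \<Union>TS"
      using T(1) m_inv_consistent[OF sN gN] by auto
  qed
  then show ?thesis using generate_consistent[OF UN sN] by simp
qed

end


context group begin

lemma self_normal_H:
  assumes sN: "subgroup N G" shows "N \<lhd> G\<lparr>carrier := N\<rparr>"
proof -
  have "\<forall>n\<in>N. \<forall>k\<in>N. n \<otimes> k \<otimes> inv n \<in> N"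
    using subgroup.m_closed[OF sN] subgroup.m_inv_closed[OF sN] by blast
  then show ?thesis using iffD2[OF normal_sub_iff[OF sN]] sN by blast
qed

lemma factor_props:
  assumes sN: "subgroup N G" and T: "T \<in> simple_factors G N"
  shows "T \<lhd> G\<lparr>carrier := N\<rparr>" "T \<subseteq> N" "T \<noteq> {\<one>}" "subgroup T G"
    "minimal_normal (G\<lparr>carrier := N\<rparr>) T"
proof -
  show mT: "minimal_normal (G\<lparr>carrier := N\<rparr>) T" using T unfolding simple_factors_def by simp
  show nT: "T \<lhd> G\<lparr>carrier := N\<rparr>" using mT unfolding minimal_normal_def by blast
  show "T \<noteq> {\<one>}" using mT unfolding minimal_normal_def by simp
  show "T \<subseteq> N" "subgroup T G" using iffD1[OF normal_sub_iff[OF sN] nT] by auto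
qed

lemma gen_factors_eq:
  assumes mN: "minimal_normal G N" and ne: "simple_factors G N \<noteq> {}"
  shows "generate G (\<Union>(simple_factors G N)) = N"
proof -
  have N: "N \<lhd> G" using mN unfolding minimal_normal_def by blast
  have sN: "subgroup N G" using N normal_imp_subgroup by blast
  have Nc: "N \<subseteq> carrier G" using subgroup.subset[OF sN] .
  let ?U = "\<Union>(simple_factors G N)"
  have UN: "?U \<subseteq> N" using factor_props(2)[OF sN] by blast
  have Uc: "?U \<subseteq> carrier G" using UN Nc by blast
  have conjU: "\<And>h g. h \<in> ?U \<Longrightarrow> g \<in> carrier G \<Longrightarrow> g \<otimes> h \<otimes> inv g \<in> ?U"
  proof -
    fix h g assume h: "h \<in> ?U" and g: "g \<in> carrier G"
    then obtain T where T: "T \<in> simple_factors G N" "h \<in> T" by blast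
    have "(\<lambda>x. g \<otimes> x \<otimes> inv g) ` T \<in> simple_factors G N"
      using conj_min_normal[OF N g factor_props(5)[OF sN T(1)]] unfolding simple_factors_def by simp
    moreover have "g \<otimes> h \<otimes> inv g \<in> (\<lambda>x. g \<otimes> x \<otimes> inv g) ` T" using T(2) by blast
    ultimately show "g \<otimes> h \<otimes> inv g \<in> ?U" by blast
  qed
  have nU: "generate G ?U \<lhd> G" by (rule normal_generateI[OF Uc conjU])
  have gUN: "generate G ?U \<subseteq> N" by (rule generate_subgroup_incl[OF UN sN])
  obtain T where T: "T \<in> simple_factors G N" using ne by blast
  have TU: "T \<subseteq> generate G ?U" using T generate.incl[of _ ?U G] by blast
  have "generate G ?U \<noteq> {\<one>}"
  proof
    assume "generate G ?U = {\<one>}"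
    then have "T \<subseteq> {\<one>}" using TU by blast
    then show False using factor_props(3,4)[OF sN T] subgroup.one_closed by blast
  qed
  then show ?thesis using mN nU gUN unfolding minimal_normal_def by blast
qed

lemma CD_core:
  assumes finG: "finite (carrier G)" and mN: "minimal_normal G N" and nab: "\<not> abelian_set G N"
    and dP: "disjoint P" and UP: "\<Union>P = simple_factors G N" and cP: "card P \<ge> 2" and m2: "m \<ge> 2"
    and PB: "\<forall>B\<in>P. card B = m \<and> full_diagonal G (generate G (\<Union>B)) (D B)"
    and Nst: "Na = generate G (\<Union>B\<in>P. D B)"
  shows "\<exists>K. subgroup K G \<and> K \<subseteq> N \<and> Na <#> K = N \<and> Na \<inter> K = {\<one>}"
proof -
  have N: "N \<lhd> G" using mN unfolding minimal_normal_def by blast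
  have sN: "subgroup N G" using N normal_imp_subgroup by blast
  have Nc: "N \<subseteq> carrier G" using subgroup.subset[OF sN] .
  have finN: "finite N" using finite_subset[OF Nc finG] .
  interpret H: group "G\<lparr>carrier := N\<rparr>" using subgroup_imp_group[OF sN] .
  have finP: "finite P" using cP by (metis card.infinite not_numeral_le_zero)
  have Pne: "P \<noteq> {}" using cP by auto
  have BSF: "\<And>B. B \<in> P \<Longrightarrow> B \<subseteq> simple_factors G N" using UP by blast
  have Bne: "\<And>B. B \<in> P \<Longrightarrow> B \<noteq> {}" using PB m2 by fastforce
  define Nf where "Nf B = generate G (\<Union>B)" for B
  have UBN: "\<And>B. B \<in> P \<Longrightarrow> \<Union>B \<subseteq> N" using BSF factor_props(2)[OF sN] by blast
  have UBc: "\<And>B. B \<in> P \<Longrightarrow> \<Union>B \<subseteq> carrier G" using UBN Nc by blast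
  have sNf: "\<And>B. B \<in> P \<Longrightarrow> subgroup (Nf B) G" unfolding Nf_def using generate_is_subgroup UBc by blast
  have NfN: "\<And>B. B \<in> P \<Longrightarrow> Nf B \<subseteq> N" unfolding Nf_def using generate_subgroup_incl[OF _ sN] UBN by blast
  have Nfc: "\<And>B. B \<in> P \<Longrightarrow> Nf B \<subseteq> carrier G" using NfN Nc by blast
  have NfH: "\<And>B. B \<in> P \<Longrightarrow> Nf B \<lhd> G\<lparr>carrier := N\<rparr>"
    unfolding Nf_def using gen_normal_H[OF sN] BSF factor_props(1)[OF sN] by blast
  have Nf1: "\<And>B. B \<in> P \<Longrightarrow> Nf B \<noteq> {\<one>}"
  proof
    fix B assume B: "B \<in> P" and e: "Nf B = {\<one>}"
    obtain T where T: "T \<in> B" using Bne[OF B] by blast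
    have TS: "T \<in> simple_factors G N" using T BSF[OF B] by blast
    have "T \<subseteq> Nf B" unfolding Nf_def using T generate.incl[of _ "\<Union>B" G] by blast
    then have "T \<subseteq> {\<one>}" using e by simp
    then show False using factor_props(3,4)[OF sN TS] subgroup.one_closed by blast
  qed
  have exT: "\<And>B. B \<in> P \<Longrightarrow> \<exists>T. T \<in> simple_factors G (Nf B)"
  proof -
    fix B assume B: "B \<in> P"
    have finNf: "finite (Nf B)" using finite_subset[OF Nfc[OF B] finG] .
    obtain T where "minimal_normal (G\<lparr>carrier := Nf B\<rparr>) T"
      using exists_min_normal[OF sNf[OF B] finNf self_normal_H[OF sNf[OF B]] Nf1[OF B]] by blast
    then show "\<exists>T. T \<in> simple_factors G (Nf B)" unfolding simple_factors_def by blast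
  qed
  define TB where "TB B = (SOME T. T \<in> simple_factors G (Nf B))" for B
  have TBS: "\<And>B. B \<in> P \<Longrightarrow> TB B \<in> simple_factors G (Nf B)" unfolding TB_def using exT by (metis someI_ex)
  have TBc: "\<And>B. B \<in> P \<Longrightarrow> TB B \<subseteq> carrier G"
    using factor_props(2)[OF sNf TBS] Nfc by blast
  define Cf where "Cf B = centralizer_in G (Nf B) (TB B)" for B
  have sCf: "\<And>B. B \<in> P \<Longrightarrow> subgroup (Cf B) G" unfolding Cf_def using centralizer_sub(1)[OF sNf TBc] by blast
  have CN: "\<And>B. B \<in> P \<Longrightarrow> Cf B \<subseteq> Nf B" unfolding Cf_def using centralizer_sub(2)[OF sNf TBc] by blast
  have fdB: "\<And>B. B \<in> P \<Longrightarrow> full_diagonal G (Nf B) (D B)" unfolding Nf_def using PB by blast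
  have sDf: "\<And>B. B \<in> P \<Longrightarrow> subgroup (D B) G" using fdB unfolding full_diagonal_def by blast
  have DN: "\<And>B. B \<in> P \<Longrightarrow> D B \<subseteq> Nf B" using fdB unfolding full_diagonal_def by blast
  have DC: "\<And>B. B \<in> P \<Longrightarrow> D B <#> Cf B = Nf B"
    using fdB TBS unfolding full_diagonal_def Cf_def by blast
  have DCi: "\<And>B. B \<in> P \<Longrightarrow> D B \<inter> Cf B = {\<one>}"
    using fdB TBS unfolding full_diagonal_def Cf_def by blast
  have comm: "\<And>B B' x y. B \<in> P \<Longrightarrow> B' \<in> P \<Longrightarrow> B \<noteq> B' \<Longrightarrow> x \<in> Nf B \<Longrightarrow> y \<in> Nf B' \<Longrightarrow> x \<otimes> y = y \<otimes> x"
  proof -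
    fix B B' x y assume B: "B \<in> P" and B': "B' \<in> P" and ne: "B \<noteq> B'" and x: "x \<in> Nf B" and y: "y \<in> Nf B'"
    have gc: "\<forall>u\<in>\<Union>B. \<forall>v\<in>\<Union>B'. u \<otimes> v = v \<otimes> u"
    proof (intro ballI)
      fix u v assume "u \<in> \<Union>B" "v \<in> \<Union>B'"
      then obtain T T' where T: "T \<in> B" "u \<in> T" and T': "T' \<in> B'" "v \<in> T'" by blast
      have "B \<inter> B' = {}" using disjointD[OF dP B B' ne] .
      then have TT: "T \<noteq> T'" using T(1) T'(1) by blast
      have m1: "minimal_normal (G\<lparr>carrier := N\<rparr>) T" using factor_props(5)[OF sN] BSF[OF B] T(1) by blast
      have m2: "minimal_normal (G\<lparr>carrier := N\<rparr>) T'" using factor_props(5)[OF sN] BSF[OF B'] T'(1) by blast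
      have "u \<otimes>\<^bsub>G\<lparr>carrier := N\<rparr>\<^esub> v = v \<otimes>\<^bsub>G\<lparr>carrier := N\<rparr>\<^esub> u"
        by (rule H.min_normal_commute[OF m1 m2 TT T(2) T'(2)])
      then show "u \<otimes> v = v \<otimes> u" by simp
    qed
    show "x \<otimes> y = y \<otimes> x"
      using commute_generate[OF UBc[OF B] UBc[OF B'] gc] x y unfolding Nf_def by blast
  qed
  have ind: "\<And>B Q'. B \<in> P \<Longrightarrow> Q' \<subseteq> P \<Longrightarrow> B \<notin> Q' \<Longrightarrow> Nf B \<inter> generate G (\<Union>(Nf ` Q')) = {\<one>}"
  proof -
    fix B Q' assume B: "B \<in> P" and Q': "Q' \<subseteq> P" and BQ: "B \<notin> Q'"
    define NQ where "NQ = generate G (\<Union>(Nf ` Q'))"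
    have UQc: "\<Union>(Nf ` Q') \<subseteq> carrier G" using Nfc Q' by blast
    have NQH: "NQ \<lhd> G\<lparr>carrier := N\<rparr>" unfolding NQ_def using gen_normal_H[OF sN] NfH Q' by blast
    have NQp: "subgroup NQ G" "NQ \<subseteq> N" "\<forall>n\<in>N. \<forall>k\<in>NQ. n \<otimes> k \<otimes> inv n \<in> NQ"
      using iffD1[OF normal_sub_iff[OF sN] NQH] by auto
    have NBp: "subgroup (Nf B) G" "Nf B \<subseteq> N" "\<forall>n\<in>N. \<forall>k\<in>Nf B. n \<otimes> k \<otimes> inv n \<in> Nf B"
      using iffD1[OF normal_sub_iff[OF sN] NfH[OF B]] by auto
    define L where "L = Nf B \<inter> NQ"
    have LH: "L \<lhd> G\<lparr>carrier := N\<rparr>"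
    proof -
      have "subgroup L G" unfolding L_def by (rule subgroups_Inter_pair[OF NBp(1) NQp(1)])
      moreover have "L \<subseteq> N" unfolding L_def using NBp(2) by blast
      moreover have "\<forall>n\<in>N. \<forall>k\<in>L. n \<otimes> k \<otimes> inv n \<in> L" unfolding L_def using NBp(3) NQp(3) by blast
      ultimately show ?thesis using iffD2[OF normal_sub_iff[OF sN]] by blast
    qed
    have Lab: "abelian_set G L" unfolding abelian_set_def
    proof (intro ballI)
      fix x y assume x: "x \<in> L" and y: "y \<in> L"
      have xB: "x \<in> Nf B" and yQ: "y \<in> NQ" using x y unfolding L_def by auto
      have xc: "x \<in> carrier G" using xB Nfc[OF B] by blast
      have "\<forall>u\<in>\<Union>(Nf ` Q'). u \<otimes> x = x \<otimes> u"
      proof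
        fix u assume "u \<in> \<Union>(Nf ` Q')"
        then obtain B' where B': "B' \<in> Q'" "u \<in> Nf B'" by blast
        have "B' \<noteq> B" using B'(1) BQ by blast
        then show "u \<otimes> x = x \<otimes> u" using comm[OF _ B _ B'(2) xB] B'(1) Q' by blast
      qed
      then have "y \<otimes> x = x \<otimes> y" using commute_generate1[OF xc UQc _ yQ[unfolded NQ_def]] by blast
      then show "x \<otimes> y = y \<otimes> x" by simp
    qed
    have "L = {\<one>}"
    proof (rule ccontr)
      assume L1: "L \<noteq> {\<one>}"
      obtain T where T: "minimal_normal (G\<lparr>carrier := N\<rparr>) T" "T \<subseteq> L"
        using exists_min_normal[OF sN finN LH L1] by blast
      have "abelian_set G T" using Lab T(2) unfolding abelian_set_def by blast
      then show False using no_abelian_factor[OF mN nab T(1)] by blast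
    qed
    then show "Nf B \<inter> generate G (\<Union>(Nf ` Q')) = {\<one>}" unfolding L_def NQ_def by simp
  qed
  have main: "generate G (\<Union>(D ` P)) <#> generate G (\<Union>(Cf ` P)) = generate G (\<Union>(Nf ` P)) \<and>
         generate G (\<Union>(D ` P)) \<inter> generate G (\<Union>(Cf ` P)) = {\<one>}"
    by (rule block_induct[OF finP sNf sCf sDf CN DN DC DCi comm ind]) auto
  have SFne: "simple_factors G N \<noteq> {}" using Pne Bne BSF by blast
  have "generate G (\<Union>(Nf ` P)) = generate G (\<Union>B\<in>P. \<Union>B)"
    unfolding Nf_def using generate_union_gen[of P "\<lambda>B. \<Union>B"] UBc by simp
  also have "(\<Union>B\<in>P. \<Union>B) = \<Union>(simple_factors G N)" using UP by blast
  also have "generate G (\<Union>(simple_factors G N)) = N" by (rule gen_factors_eq[OF mN SFne])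
  finally have NP: "generate G (\<Union>(Nf ` P)) = N" .
  define K where "K = generate G (\<Union>(Cf ` P))"
  have UCc: "\<Union>(Cf ` P) \<subseteq> carrier G" using sCf subgroup.subset by blast
  have sK: "subgroup K G" unfolding K_def by (rule generate_is_subgroup[OF UCc])
  have "K \<subseteq> generate G (\<Union>(Nf ` P))" unfolding K_def using CN by (intro mono_generate) blast
  then have KN: "K \<subseteq> N" using NP by simp
  have NaD: "Na = generate G (\<Union>(D ` P))" using Nst by simp
  show ?thesis using sK KN main NP unfolding NaD K_def by blast
qed

end


theorem theorem1p4:
  fixes G :: "('a, 'c) monoid_scheme" and \<Omega> :: "'b set" and \<phi> :: "'a \<Rightarrow> 'b \<Rightarrow> 'b"
  assumes "primitive_action G \<Omega> \<phi>"
    and "finite \<Omega>"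
    and "type_HA G \<Omega> \<phi> \<or> type_HS G \<Omega> \<phi> \<or> type_HC G \<Omega> \<phi> \<or>
         type_TW G \<Omega> \<phi> \<or> type_SD G \<Omega> \<phi> \<or> type_CD G \<Omega> \<phi>"
    and "\<alpha> \<in> \<Omega>"
  shows "perfect_code_of_group G (stabilizer G \<phi> \<alpha>)"
proof -
  have ga: "group_action G \<Omega> \<phi>" and injp: "inj_on \<phi> (carrier G)"
    and tr: "\<forall>x\<in>\<Omega>. \<forall>y\<in>\<Omega>. \<exists>g\<in>carrier G. \<phi> g x = y"
    using assms(1) unfolding primitive_action_def by auto
  interpret group G using ga_group[OF ga] .
  have finG: "finite (carrier G)" using G_finite[OF ga injp assms(2)] .
  have transfer: "\<And>K \<alpha>'. \<alpha>' \<in> \<Omega> \<Longrightarrow> subgroup K G \<Longrightarrow> \<forall>k\<in>K. \<phi> k \<alpha>' = \<alpha>' \<longrightarrow> k = \<one>\<^bsub>G\<^esub> \<Longrightarrow>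
      \<forall>\<beta>\<in>\<Omega>. \<exists>k\<in>K. \<phi> k \<alpha>' = \<beta> \<Longrightarrow> perfect_code_of_group G (stabilizer G \<phi> \<alpha>)"
  proof -
    fix K \<alpha>' assume a': "\<alpha>' \<in> \<Omega>" and sK: "subgroup K G" and inj: "\<forall>k\<in>K. \<phi> k \<alpha>' = \<alpha>' \<longrightarrow> k = \<one>\<^bsub>G\<^esub>"
      and sur: "\<forall>\<beta>\<in>\<Omega>. \<exists>k\<in>K. \<phi> k \<alpha>' = \<beta>"
    obtain g where g: "g \<in> carrier G" "\<phi> g \<alpha>' = \<alpha>" using tr assms(4) a' by blast
    show "perfect_code_of_group G (stabilizer G \<phi> \<alpha>)"
      by (rule regular_transfer[OF ga a' assms(4) g sK inj sur])
  qed
  have regcase: "\<And>N. N \<lhd> G \<Longrightarrow> regular_on G \<Omega> \<phi> N \<Longrightarrow> perfect_code_of_group G (stabilizer G \<phi> \<alpha>)"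
  proof -
    fix N assume N: "N \<lhd> G" and reg: "regular_on G \<Omega> \<phi> N"
    have sN: "subgroup N G" using N normal_imp_subgroup by blast
    have ex1: "\<And>y. y \<in> \<Omega> \<Longrightarrow> \<exists>!g. g \<in> N \<and> \<phi> g \<alpha> = y" using reg assms(4) unfolding regular_on_def by blast
    have one: "\<one>\<^bsub>G\<^esub> \<in> N \<and> \<phi> \<one>\<^bsub>G\<^esub> \<alpha> = \<alpha>" using subgroup.one_closed[OF sN] act_one[OF ga assms(4)] by simp
    show "perfect_code_of_group G (stabilizer G \<phi> \<alpha>)"
    proof (rule transfer[OF assms(4) sN])
      show "\<forall>k\<in>N. \<phi> k \<alpha> = \<alpha> \<longrightarrow> k = \<one>\<^bsub>G\<^esub>"
      proof (intro ballI impI)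
        fix k assume "k \<in> N" "\<phi> k \<alpha> = \<alpha>"
        then show "k = \<one>\<^bsub>G\<^esub>" using ex1[OF assms(4)] one by blast
      qed
      show "\<forall>\<beta>\<in>\<Omega>. \<exists>k\<in>N. \<phi> k \<alpha> = \<beta>" using ex1 by blast
    qed
  qed
  have diagcase: "\<And>N \<alpha>' K. minimal_normal G N \<Longrightarrow> \<alpha>' \<in> \<Omega> \<Longrightarrow> subgroup K G \<Longrightarrow> K \<subseteq> N \<Longrightarrow>
      (N \<inter> stabilizer G \<phi> \<alpha>') <#>\<^bsub>G\<^esub> K = N \<Longrightarrow> (N \<inter> stabilizer G \<phi> \<alpha>') \<inter> K = {\<one>\<^bsub>G\<^esub>} \<Longrightarrow>
      perfect_code_of_group G (stabilizer G \<phi> \<alpha>)"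
  proof -
    fix N \<alpha>' K assume mN: "minimal_normal G N" and a': "\<alpha>' \<in> \<Omega>" and sK: "subgroup K G" and KN: "K \<subseteq> N"
      and DK: "(N \<inter> stabilizer G \<phi> \<alpha>') <#>\<^bsub>G\<^esub> K = N" and DKi: "(N \<inter> stabilizer G \<phi> \<alpha>') \<inter> K = {\<one>\<^bsub>G\<^esub>}"
    have N: "N \<lhd> G" and N1: "N \<noteq> {\<one>\<^bsub>G\<^esub>}" using mN unfolding minimal_normal_def by auto
    have sN: "subgroup N G" using N normal_imp_subgroup by blast
    have trN: "\<forall>\<beta>\<in>\<Omega>. \<exists>n\<in>N. \<phi> n \<alpha>' = \<beta>" by (rule normal_transitive[OF assms(1) N N1 a'])
    have r: "(\<forall>k\<in>K. \<phi> k \<alpha>' = \<alpha>' \<longrightarrow> k = \<one>\<^bsub>G\<^esub>) \<and> (\<forall>\<beta>\<in>\<Omega>. \<exists>k\<in>K. \<phi> k \<alpha>' = \<beta>)"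
      by (rule diag_regular[OF ga a' sK KN sN trN DK DKi])
    show "perfect_code_of_group G (stabilizer G \<phi> \<alpha>)"
      using transfer[OF a' sK] r by blast
  qed
  have umn: "\<And>N. unique_minimal_normal G N \<Longrightarrow> N \<lhd> G"
    unfolding unique_minimal_normal_def minimal_normal_def by blast
  have tmn: "\<And>N1 N2. two_minimal_normal G N1 N2 \<Longrightarrow> N1 \<lhd> G"
    unfolding two_minimal_normal_def minimal_normal_def by blast
  from assms(3) show ?thesis
  proof (elim disjE)
    assume "type_HA G \<Omega> \<phi>"
    then obtain N where "unique_minimal_normal G N" "regular_on G \<Omega> \<phi> N" unfolding type_HA_def by blast
    then show ?thesis using regcase umn by blast
  next
    assume "type_HS G \<Omega> \<phi>"
    then obtain N1 N2 where "two_minimal_normal G N1 N2" "regular_on G \<Omega> \<phi> N1" unfolding type_HS_def by blast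
    then show ?thesis using regcase tmn by blast
  next
    assume "type_HC G \<Omega> \<phi>"
    then obtain N1 N2 where "two_minimal_normal G N1 N2" "regular_on G \<Omega> \<phi> N1" unfolding type_HC_def by blast
    then show ?thesis using regcase tmn by blast
  next
    assume "type_TW G \<Omega> \<phi>"
    then obtain N where "unique_minimal_normal G N" "regular_on G \<Omega> \<phi> N" unfolding type_TW_def by blast
    then show ?thesis using regcase umn by blast
  next
    assume "type_SD G \<Omega> \<phi>"
    then obtain N \<alpha>' where um: "unique_minimal_normal G N" and a': "\<alpha>' \<in> \<Omega>"
      and fd: "full_diagonal G N (N \<inter> stabilizer G \<phi> \<alpha>')" unfolding type_SD_def by blast
    have mN: "minimal_normal G N" using um unfolding unique_minimal_normal_def by blast
    have N: "N \<lhd> G" and N1: "N \<noteq> {\<one>\<^bsub>G\<^esub>}" using mN unfolding minimal_normal_def by auto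
    have sN: "subgroup N G" using N normal_imp_subgroup by blast
    have Nc: "N \<subseteq> carrier G" using subgroup.subset[OF sN] .
    have finN: "finite N" using finite_subset[OF Nc finG] .
    obtain T where T: "minimal_normal (G\<lparr>carrier := N\<rparr>) T"
      using exists_min_normal[OF sN finN self_normal_H[OF sN] N1] by blast
    have TS: "T \<in> simple_factors G N" using T unfolding simple_factors_def by simp
    have Tc: "T \<subseteq> carrier G" using factor_props(2)[OF sN TS] Nc by blast
    define C where "C = centralizer_in G N T"
    have sC: "subgroup C G" and CN: "C \<subseteq> N" unfolding C_def using centralizer_sub[OF sN Tc] by auto
    have "(N \<inter> stabilizer G \<phi> \<alpha>') \<inter> C = {\<one>\<^bsub>G\<^esub>} \<and> (N \<inter> stabilizer G \<phi> \<alpha>') <#>\<^bsub>G\<^esub> C = N"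
      using fd TS unfolding full_diagonal_def C_def by blast
    then show ?thesis using diagcase[OF mN a' sC CN] by blast
  next
    assume "type_CD G \<Omega> \<phi>"
    then obtain N \<alpha>' P D m where um: "unique_minimal_normal G N" and nab: "\<not> abelian_set G N"
      and a': "\<alpha>' \<in> \<Omega>" and dP: "disjoint P" and UP: "\<Union>P = simple_factors G N" and cP: "card P \<ge> 2"
      and m2: "m \<ge> 2" and PB: "\<forall>B\<in>P. card B = m \<and> full_diagonal G (generate G (\<Union>B)) (D B)"
      and Nst: "N \<inter> stabilizer G \<phi> \<alpha>' = generate G (\<Union>B\<in>P. D B)"
      unfolding type_CD_def by blast
    have mN: "minimal_normal G N" using um unfolding unique_minimal_normal_def by blast
    obtain K where K: "subgroup K G" "K \<subseteq> N" "(N \<inter> stabilizer G \<phi> \<alpha>') <#>\<^bsub>G\<^esub> K = N"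
        "(N \<inter> stabilizer G \<phi> \<alpha>') \<inter> K = {\<one>\<^bsub>G\<^esub>}"
      using CD_core[OF finG mN nab dP UP cP m2 PB Nst] by blast
    show ?thesis by (rule diagcase[OF mN a' K])
  qed
qed

end
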